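(* Let $K$ be a connected simplicial complex, let $E$ be the set of edges of a spanning tree of $K$, and let $p$ be a vertex of $K$. Then $\mathcal{G}(K)\cong \mathrm{F}(E)*\pi_1(K,p)$, where $\mathrm{F}(E)$ is the free group on $E$. In particular $\pi_1(K,p)$ is a doubly free factor of $\mathcal{G}(K)$.
   Context: A simplicial complex $K$ is a collection of nonempty finite subsets (simplices) of a vertex set such that every singleton is a simplex and nonempty subsets of simplices are simplices. The floating homotopy group $\mathcal{G}(K)$ is the group presented by generators $[x,y]$ for all vertices $x,y$ with $\{x,y\}$ a simplex (including $x=y$), and relations $[x,z]=[x,y]\cdot[y,z]$ whenever $\{x,y,z\}$ is a simplex (vertices not necessarily distinct). $\pi_1(K,p)$ is the edge-path fundamental group of $K$ at $p$. A group $G$ is a doubly free factor of $H$ if $H\cong F*G$ for some free group $F$, $*$ denoting free product. *)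

theory Defs
  imports "HOL-Algebra.Group"
begin

definition simplicial_complex :: "'v set set \<Rightarrow> bool" where
  "simplicial_complex K \<longleftrightarrow>
     (\<forall>\<sigma>\<in>K. \<sigma> \<noteq> {} \<and> finite \<sigma>) \<and>
     (\<forall>\<sigma>\<in>K. \<forall>\<tau>. \<tau> \<noteq> {} \<and> \<tau> \<subseteq> \<sigma> \<longrightarrow> \<tau> \<in> K)"

definition vertices :: "'v set set \<Rightarrow> 'v set" where
  "vertices K = \<Union>K"

definition sc_connected :: "'v set set \<Rightarrow> bool" where
  "sc_connected K \<longleftrightarrow>
     (\<forall>x\<in>vertices K. \<forall>y\<in>vertices K. (\<lambda>a b. {a, b} \<in> K)\<^sup>*\<^sup>* x y)"

definition graph_connected :: "'v set \<Rightarrow> 'v set set \<Rightarrow> bool" where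
  "graph_connected V E \<longleftrightarrow> (\<forall>x\<in>V. \<forall>y\<in>V. (\<lambda>a b. {a, b} \<in> E)\<^sup>*\<^sup>* x y)"

definition has_cycle :: "'v set set \<Rightarrow> bool" where
  "has_cycle E \<longleftrightarrow> (\<exists>vs. length vs \<ge> 3 \<and> distinct vs \<and>
      (\<forall>i < length vs - 1. {vs ! i, vs ! Suc i} \<in> E) \<and> {last vs, hd vs} \<in> E)"

definition spanning_tree_edges :: "'v set set \<Rightarrow> 'v set set \<Rightarrow> bool" where
  "spanning_tree_edges K E \<longleftrightarrow>
     E \<subseteq> {\<sigma>\<in>K. card \<sigma> = 2} \<and> graph_connected (vertices K) E \<and> \<not> has_cycle E"

type_synonym 's word = "('s \<times> bool) list"  \<comment> \<open>True = generator, False = its inverse\<close>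

definition words :: "'s set \<Rightarrow> 's word set" where
  "words S = {w. \<forall>x\<in>set w. fst x \<in> S}"

inductive pres_step :: "'s set \<Rightarrow> ('s word \<times> 's word) set \<Rightarrow> 's word \<Rightarrow> 's word \<Rightarrow> bool"
  for S R where
  cancel: "s \<in> S \<Longrightarrow> pres_step S R (u @ [(s, b), (s, \<not> b)] @ v) (u @ v)"
| rel: "(l, r) \<in> R \<Longrightarrow> pres_step S R (u @ l @ v) (u @ r @ v)"

definition pres_eq :: "'s set \<Rightarrow> ('s word \<times> 's word) set \<Rightarrow> 's word \<Rightarrow> 's word \<Rightarrow> bool" where
  "pres_eq S R = (\<lambda>a b. pres_step S R a b \<or> pres_step S R b a)\<^sup>*\<^sup>*"

definition pres_class :: "'s set \<Rightarrow> ('s word \<times> 's word) set \<Rightarrow> 's word \<Rightarrow> 's word set" where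
  "pres_class S R w = {w' \<in> words S. pres_eq S R w w'}"

definition presented_group :: "'s set \<Rightarrow> ('s word \<times> 's word) set \<Rightarrow> 's word set monoid" where
  "presented_group S R =
     \<lparr> carrier = pres_class S R ` words S,
       mult = (\<lambda>A B. pres_class S R ((SOME a. a \<in> A) @ (SOME b. b \<in> B))),
       one = pres_class S R [] \<rparr>"

definition free_group :: "'s set \<Rightarrow> 's word set monoid" where
  "free_group X = presented_group X {}"

definition free_product :: "('a, 'm) monoid_scheme \<Rightarrow> ('b, 'n) monoid_scheme \<Rightarrow> ('a + 'b) word set monoid" where
  "free_product G H = presented_group (Inl ` carrier G \<union> Inr ` carrier H)
     ({([(Inl a, True), (Inl b, True)], [(Inl (a \<otimes>\<^bsub>G\<^esub> b), True)]) | a b. a \<in> carrier G \<and> b \<in> carrier G}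
      \<union> {([(Inr a, True), (Inr b, True)], [(Inr (a \<otimes>\<^bsub>H\<^esub> b), True)]) | a b. a \<in> carrier H \<and> b \<in> carrier H})"

definition floating_group :: "'v set set \<Rightarrow> ('v \<times> 'v) word set monoid" where
  "floating_group K = presented_group {(x, y). {x, y} \<in> K}
     {([((x, z), True)], [((x, y), True), ((y, z), True)]) | x y z. {x, y, z} \<in> K}"

definition edge_path :: "'v set set \<Rightarrow> 'v list \<Rightarrow> bool" where
  "edge_path K vs \<longleftrightarrow> vs \<noteq> [] \<and> (\<forall>i < length vs - 1. {vs ! i, vs ! Suc i} \<in> K)"

definition edge_loops :: "'v set set \<Rightarrow> 'v \<Rightarrow> 'v list set" where
  "edge_loops K p = {vs. edge_path K vs \<and> hd vs = p \<and> last vs = p}"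

inductive ep_step :: "'v set set \<Rightarrow> 'v list \<Rightarrow> 'v list \<Rightarrow> bool" for K where
  tri: "{x, y, z} \<in> K \<Longrightarrow> ep_step K (u @ [x, y, z] @ v) (u @ [x, z] @ v)"
| dup: "ep_step K (u @ [x, x] @ v) (u @ [x] @ v)"

definition ep_eq :: "'v set set \<Rightarrow> 'v list \<Rightarrow> 'v list \<Rightarrow> bool" where
  "ep_eq K = (\<lambda>a b. ep_step K a b \<or> ep_step K b a)\<^sup>*\<^sup>*"

definition ep_class :: "'v set set \<Rightarrow> 'v \<Rightarrow> 'v list \<Rightarrow> 'v list set" where
  "ep_class K p w = {w' \<in> edge_loops K p. ep_eq K w w'}"

definition edge_path_group :: "'v set set \<Rightarrow> 'v \<Rightarrow> 'v list set monoid" where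
  "edge_path_group K p =
     \<lparr> carrier = ep_class K p ` edge_loops K p,
       mult = (\<lambda>A B. ep_class K p ((SOME a. a \<in> A) @ tl (SOME b. b \<in> B))),
       one = ep_class K p [p] \<rparr>"

end

theory Submission
  imports Defs
begin


definition winv :: "'s word \<Rightarrow> 's word" where
  "winv w = rev (map (\<lambda>(s,b). (s, \<not> b)) w)"

definition wmap :: "('s \<Rightarrow> 't word) \<Rightarrow> 's word \<Rightarrow> 't word" where
  "wmap g w = concat (map (\<lambda>(s,b). if b then g s else winv (g s)) w)"

lemma winv_Nil[simp]: "winv [] = []" by (simp add: winv_def)
lemma winv_Cons[simp]: "winv (x # w) = winv w @ [(fst x, \<not> snd x)]"
  by (cases x) (simp add: winv_def)
lemma winv_append[simp]: "winv (a @ b) = winv b @ winv a" by (simp add: winv_def)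
lemma winv_winv[simp]: "winv (winv w) = w"
  by (induction w) auto
lemma wmap_Nil[simp]: "wmap g [] = []" by (simp add: wmap_def)
lemma wmap_Cons[simp]: "wmap g (x # w) = (if snd x then g (fst x) else winv (g (fst x))) @ wmap g w"
  by (cases x) (simp add: wmap_def)
lemma wmap_append[simp]: "wmap g (a @ b) = wmap g a @ wmap g b" by (simp add: wmap_def)
lemma wmap_winv: "wmap g (winv w) = winv (wmap g w)"
  by (induction w) auto
lemma wmap_comp: "wmap h (wmap g w) = wmap (\<lambda>s. wmap h (g s)) w"
  by (induction w) (auto simp: wmap_winv)

lemma words_append[simp]: "a @ b \<in> words S \<longleftrightarrow> a \<in> words S \<and> b \<in> words S"
  by (auto simp: words_def)
lemma words_Cons[simp]: "x # b \<in> words S \<longleftrightarrow> fst x \<in> S \<and> b \<in> words S"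
  by (auto simp: words_def)
lemma words_Nil[simp]: "[] \<in> words S" by (simp add: words_def)
lemma words_winv[simp]: "winv w \<in> words S \<longleftrightarrow> w \<in> words S"
  by (induction w) auto
lemma words_wmap: "w \<in> words S \<Longrightarrow> (\<And>s. s \<in> S \<Longrightarrow> g s \<in> words T) \<Longrightarrow> wmap g w \<in> words T"
  by (induction w) auto

lemma PE_refl[simp]: "pres_eq S R a a" by (simp add: pres_eq_def)

lemma PE_sym: "pres_eq S R a b \<Longrightarrow> pres_eq S R b a"
  unfolding pres_eq_def
proof (induction rule: rtranclp_induct)
  case base then show ?case by simp
next
  case (step y z)
  then have "(\<lambda>a b. pres_step S R a b \<or> pres_step S R b a) z y" by blast
  then show ?case using step(3) by (rule converse_rtranclp_into_rtranclp)
qed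

lemma PE_trans[trans]: "pres_eq S R a b \<Longrightarrow> pres_eq S R b c \<Longrightarrow> pres_eq S R a c"
  unfolding pres_eq_def by (rule rtranclp_trans)

lemma PE_step: "pres_step S R a b \<Longrightarrow> pres_eq S R a b"
  unfolding pres_eq_def by auto

lemma pres_step_cong: "pres_step S R a b \<Longrightarrow> pres_step S R (u @ a @ v) (u @ b @ v)"
proof (induction rule: pres_step.induct)
  case (cancel s u' b v')
  then show ?case using pres_step.cancel[of s S R "u @ u'" b "v' @ v"] by simp
next
  case (rel l r u' v')
  then show ?case using pres_step.rel[of l r R S "u @ u'" "v' @ v"] by simp
qed

lemma PE_cong: "pres_eq S R a b \<Longrightarrow> pres_eq S R (u @ a @ v) (u @ b @ v)"
  unfolding pres_eq_def
proof (induction rule: rtranclp_induct)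
  case base then show ?case by simp
next
  case (step y z)
  then show ?case using pres_step_cong
    by (metis (mono_tags, lifting) rtranclp.rtrancl_into_rtrancl)
qed

lemma PE_append: "pres_eq S R a a' \<Longrightarrow> pres_eq S R b b' \<Longrightarrow> pres_eq S R (a @ b) (a' @ b')"
  using PE_cong[of S R a a' "[]" b] PE_cong[of S R b b' a' "[]"] by (auto intro: PE_trans)

lemma PE_cancel: "s \<in> S \<Longrightarrow> pres_eq S R (u @ [(s,b),(s,\<not>b)] @ v) (u @ v)"
  by (rule PE_step) (rule pres_step.cancel)

lemma PE_cancel0: "s \<in> S \<Longrightarrow> pres_eq S R [(s,b),(s,\<not>b)] []"
  using PE_cancel[of s S R "[]" b "[]"] by simp

lemma PE_rel: "(l, r) \<in> R \<Longrightarrow> pres_eq S R (u @ l @ v) (u @ r @ v)"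
  by (rule PE_step) (rule pres_step.rel)

lemma PE_rel0: "(l, r) \<in> R \<Longrightarrow> pres_eq S R l r"
  using PE_rel[of l r R S "[]" "[]"] by simp

lemma PE_winv_right: "w \<in> words S \<Longrightarrow> pres_eq S R (w @ winv w) []"
proof (induction w)
  case Nil then show ?case by simp
next
  case (Cons x w)
  have "pres_eq S R ([x] @ (w @ winv w) @ [(fst x, \<not> snd x)]) ([x] @ [] @ [(fst x, \<not> snd x)])"
    using Cons by (intro PE_cong) auto
  moreover have "pres_eq S R [(fst x, snd x), (fst x, \<not> snd x)] []"
    using Cons by (intro PE_cancel0) auto
  ultimately show ?case by (auto intro: PE_trans)
qed

lemma PE_winv_left: "w \<in> words S \<Longrightarrow> pres_eq S R (winv w @ w) []"
  using PE_winv_right[of "winv w" S R] by simp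

lemma PE_winv: assumes "x \<in> words S" "y \<in> words S" "pres_eq S R x y"
  shows "pres_eq S R (winv x) (winv y)"
proof -
  have "pres_eq S R (winv x) (winv x @ y @ winv y)"
    using PE_cong[OF PE_sym[OF PE_winv_right[OF assms(2)]], where u="winv x" and v="[]"] by simp
  also have "pres_eq S R \<dots> (winv x @ x @ winv y)"
    using PE_cong[OF PE_sym[OF assms(3)]] by blast
  also have "pres_eq S R \<dots> (winv y)"
    using PE_cong[OF PE_winv_left[OF assms(1)], where u="[]" and v="winv y"] by simp
  finally show ?thesis .
qed

lemma wmap_PE:
  assumes gw: "\<And>s. s \<in> S \<Longrightarrow> g s \<in> words T"
    and gr: "\<And>l r. (l, r) \<in> R \<Longrightarrow> pres_eq T Q (wmap g l) (wmap g r)"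
    and "pres_eq S R a b"
  shows "pres_eq T Q (wmap g a) (wmap g b)"
  using assms(3) unfolding pres_eq_def[of S R]
proof (induction rule: rtranclp_induct)
  case base then show ?case by simp
next
  case (step y z)
  have "pres_eq T Q (wmap g y) (wmap g z)" if "pres_step S R y z" for y z
    using that
  proof (induction rule: pres_step.induct)
    case (cancel s u b v)
    have "pres_eq T Q (wmap g [(s,b),(s,\<not>b)]) []"
      using gw[OF cancel] PE_winv_right PE_winv_left by (cases b) auto
    then show ?case using PE_cong by (metis append_Nil wmap_append)
  next
    case (rel l r u v)
    then show ?case using gr PE_cong by (metis wmap_append)
  qed
  then show ?case using step PE_sym PE_trans by metis
qed

lemma wmap_id:
  assumes "w \<in> words S"
    and kw: "\<And>s. s \<in> S \<Longrightarrow> k s \<in> words S"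
    and kid: "\<And>s. s \<in> S \<Longrightarrow> pres_eq S R (k s) [(s, True)]"
  shows "pres_eq S R (wmap k w) w"
  using assms(1)
proof (induction w)
  case Nil then show ?case by simp
next
  case (Cons x w)
  obtain s b where x: "x = (s,b)" by force
  have s: "s \<in> S" using Cons x by auto
  have "pres_eq S R (if b then k s else winv (k s)) [(s,b)]"
  proof (cases b)
    case True then show ?thesis using kid s by simp
  next
    case False
    have "pres_eq S R (winv (k s)) (winv [(s,True)])"
      using PE_winv kw kid s by (metis words_Cons words_Nil fst_conv)
    then show ?thesis using False by simp
  qed
  then have "pres_eq S R ((if b then k s else winv (k s)) @ wmap k w) ([(s,b)] @ w)"
    using Cons x by (intro PE_append) auto
  then show ?case using x by (cases b) auto
qed

lemma class_mem: "w \<in> words S \<Longrightarrow> w \<in> pres_class S R w"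
  by (simp add: pres_class_def)

lemma class_eq: "pres_eq S R a b \<Longrightarrow> pres_class S R a = pres_class S R b"
  unfolding pres_class_def using PE_sym PE_trans by blast

lemma class_memD: "x \<in> pres_class S R w \<Longrightarrow> pres_eq S R w x \<and> x \<in> words S"
  by (simp add: pres_class_def)

lemma class_some: "w \<in> words S \<Longrightarrow> pres_eq S R w (SOME a. a \<in> pres_class S R w) \<and> (SOME a. a \<in> pres_class S R w) \<in> words S"
  using class_memD class_mem by (metis someI)

lemma pg_carrier: "carrier (presented_group S R) = pres_class S R ` words S"
  by (simp add: presented_group_def)

lemma pg_one: "one (presented_group S R) = pres_class S R []"
  by (simp add: presented_group_def)

lemma pg_mult: assumes "a \<in> words S" "b \<in> words S"
  shows "pres_class S R a \<otimes>\<^bsub>presented_group S R\<^esub> pres_class S R b = pres_class S R (a @ b)"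
proof -
  have "pres_eq S R (a @ b) ((SOME x. x \<in> pres_class S R a) @ (SOME x. x \<in> pres_class S R b))"
    using class_some[OF assms(1)] class_some[OF assms(2)] PE_append by blast
  then show ?thesis by (simp add: presented_group_def class_eq)
qed

definition Phi :: "'s set \<Rightarrow> ('s word \<times> 's word) set \<Rightarrow> 't set \<Rightarrow> ('t word \<times> 't word) set \<Rightarrow> ('s \<Rightarrow> 't word) \<Rightarrow> 's word set \<Rightarrow> 't word set" where
  "Phi S R T Q g A = pres_class T Q (wmap g (SOME a. a \<in> A))"

lemma Phi_class:
  assumes gw: "\<And>s. s \<in> S \<Longrightarrow> g s \<in> words T"
    and gr: "\<And>l r. (l, r) \<in> R \<Longrightarrow> pres_eq T Q (wmap g l) (wmap g r)"
    and "a \<in> words S"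
  shows "Phi S R T Q g (pres_class S R a) = pres_class T Q (wmap g a)"
  unfolding Phi_def
  by (rule class_eq[symmetric], rule wmap_PE[OF gw gr], auto simp: class_some[OF assms(3)])

lemma presented_iso:
  assumes gw: "\<And>s. s \<in> S \<Longrightarrow> g s \<in> words T"
    and gr: "\<And>l r. (l, r) \<in> R \<Longrightarrow> pres_eq T Q (wmap g l) (wmap g r)"
    and hw: "\<And>t. t \<in> T \<Longrightarrow> h t \<in> words S"
    and hr: "\<And>l r. (l, r) \<in> Q \<Longrightarrow> pres_eq S R (wmap h l) (wmap h r)"
    and hg: "\<And>s. s \<in> S \<Longrightarrow> pres_eq S R (wmap h (g s)) [(s, True)]"
    and gh: "\<And>t. t \<in> T \<Longrightarrow> pres_eq T Q (wmap g (h t)) [(t, True)]"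
  shows "presented_group S R \<cong> presented_group T Q"
proof (rule is_isoI)
  let ?f = "Phi S R T Q g" and ?f' = "Phi T Q S R h"
  have fc: "?f (pres_class S R a) = pres_class T Q (wmap g a)" if "a \<in> words S" for a
    using Phi_class[OF gw gr that] .
  have f'c: "?f' (pres_class T Q a) = pres_class S R (wmap h a)" if "a \<in> words T" for a
    using Phi_class[OF hw hr that] .
  have gwa: "wmap g a \<in> words T" if "a \<in> words S" for a using words_wmap[OF that gw] .
  have hwa: "wmap h a \<in> words S" if "a \<in> words T" for a using words_wmap[OF that hw] .
  have hom: "?f \<in> hom (presented_group S R) (presented_group T Q)"
  proof (rule homI)
    fix x assume "x \<in> carrier (presented_group S R)"
    then show "?f x \<in> carrier (presented_group T Q)"
      using fc gwa by (auto simp: pg_carrier)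
  next
    fix x y assume "x \<in> carrier (presented_group S R)" "y \<in> carrier (presented_group S R)"
    then obtain a b where ab: "a \<in> words S" "b \<in> words S" "x = pres_class S R a" "y = pres_class S R b"
      by (auto simp: pg_carrier)
    show "?f (x \<otimes>\<^bsub>presented_group S R\<^esub> y) = ?f x \<otimes>\<^bsub>presented_group T Q\<^esub> ?f y"
      using ab by (simp add: pg_mult fc gwa)
  qed
  have bij: "bij_betw ?f (carrier (presented_group S R)) (carrier (presented_group T Q))"
  proof (rule bij_betw_byWitness[where f' = ?f'])
    show "\<forall>a\<in>carrier (presented_group S R). ?f' (?f a) = a"
    proof
      fix x assume "x \<in> carrier (presented_group S R)"
      then obtain a where a: "a \<in> words S" "x = pres_class S R a" by (auto simp: pg_carrier)
      have "pres_eq S R (wmap h (wmap g a)) a"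
        unfolding wmap_comp
        by (rule wmap_id[OF a(1)]) (auto intro: words_wmap gw hw hg)
      then show "?f' (?f x) = x" using a by (simp add: fc f'c gwa class_eq)
    qed
    show "\<forall>a\<in>carrier (presented_group T Q). ?f (?f' a) = a"
    proof
      fix x assume "x \<in> carrier (presented_group T Q)"
      then obtain a where a: "a \<in> words T" "x = pres_class T Q a" by (auto simp: pg_carrier)
      have "pres_eq T Q (wmap g (wmap h a)) a"
        unfolding wmap_comp
        by (rule wmap_id[OF a(1)]) (auto intro: words_wmap gw hw gh)
      then show "?f (?f' x) = x" using a by (simp add: fc f'c hwa class_eq)
    qed
    show "?f ` carrier (presented_group S R) \<subseteq> carrier (presented_group T Q)"
      using fc gwa by (auto simp: pg_carrier)
    show "?f' ` carrier (presented_group T Q) \<subseteq> carrier (presented_group S R)"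
      using f'c hwa by (auto simp: pg_carrier)
  qed
  show "?f \<in> iso (presented_group S R) (presented_group T Q)"
    using hom bij by (simp add: iso_def)
qed



fun epath :: "'v set set \<Rightarrow> 'v list \<Rightarrow> bool" where
  "epath K [] = False"
| "epath K [x] = True"
| "epath K (x # y # r) = ({x, y} \<in> K \<and> epath K (y # r))"

lemma edge_path_epath: "edge_path K l = epath K l"
proof (induction K l rule: epath.induct)
  case (1 K) then show ?case by (simp add: edge_path_def)
next
  case (2 K x) then show ?case by (simp add: edge_path_def)
next
  case (3 K x y r)
  have "(\<forall>i<length (x # y # r) - 1. {(x # y # r) ! i, (x # y # r) ! Suc i} \<in> K) \<longleftrightarrow>
        {x,y} \<in> K \<and> (\<forall>i<length (y # r) - 1. {(y # r) ! i, (y # r) ! Suc i} \<in> K)"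
    by (auto simp: less_Suc_eq_0_disj)
  then show ?case using 3 by (simp add: edge_path_def)
qed

lemma epath_append: "epath K (u @ x # v) \<longleftrightarrow> epath K (u @ [x]) \<and> epath K (x # v)"
proof (induction u)
  case Nil then show ?case by simp
next
  case (Cons a u)
  then show ?case by (cases u) auto
qed

lemma epath_nonempty: "epath K l \<Longrightarrow> l \<noteq> []" by auto

lemma epath_snoc: "epath K (u @ [x, y]) \<longleftrightarrow> epath K (u @ [x]) \<and> {x,y} \<in> K"
  using epath_append[of K u x "[y]"] by auto

lemma epath_rev: "epath K (rev l) \<longleftrightarrow> epath K l"
proof (induction K l rule: epath.induct)
  case (3 K x y r)
  have "rev (x # y # r) = rev r @ [y, x]" by simp
  then show ?case using 3 epath_snoc[of K "rev r" y x] insert_commute[of y x "{}"] by auto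
qed auto

lemma epath_mono: "epath K l \<Longrightarrow> K \<subseteq> K' \<Longrightarrow> epath K' l"
  by (induction K l rule: epath.induct) auto

lemma epath_concat: "epath K a \<Longrightarrow> epath K b \<Longrightarrow> last a = hd b \<Longrightarrow> epath K (a @ tl b)"
proof -
  assume a: "epath K a" and b: "epath K b" and l: "last a = hd b"
  obtain x b' where bb: "b = x # b'" using b by (cases b) auto
  obtain a' where aa: "a = a' @ [x]" using a l bb by (metis append_butlast_last_id epath_nonempty list.sel(1))
  show ?thesis using a b aa bb epath_append[of K a' x b'] by simp
qed

lemma epath_take: "epath K l \<Longrightarrow> i < length l \<Longrightarrow> epath K (take (Suc i) l)"
proof (induction K l arbitrary: i rule: epath.induct)
  case (3 K x y r)
  then show ?case by (cases i) auto
qed auto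

lemma epath_avoid: "epath E q \<Longrightarrow> v \<notin> set q \<Longrightarrow> v \<in> e \<Longrightarrow> epath (E - {e}) q"
  by (induction E q rule: epath.induct) auto

lemma EQ_refl[simp]: "ep_eq K a a" by (simp add: ep_eq_def)

lemma EQ_sym: "ep_eq K a b \<Longrightarrow> ep_eq K b a"
  unfolding ep_eq_def
proof (induction rule: rtranclp_induct)
  case base then show ?case by simp
next
  case (step y z)
  then have "(\<lambda>a b. ep_step K a b \<or> ep_step K b a) z y" by blast
  then show ?case using step(3) by (rule converse_rtranclp_into_rtranclp)
qed

lemma EQ_trans[trans]: "ep_eq K a b \<Longrightarrow> ep_eq K b c \<Longrightarrow> ep_eq K a c"
  unfolding ep_eq_def by (rule rtranclp_trans)

lemma ep_step_cong: "ep_step K a b \<Longrightarrow> ep_step K (u @ a @ v) (u @ b @ v)"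
proof (induction rule: ep_step.induct)
  case (tri x y z u' v')
  then show ?case using ep_step.tri[of x y z K "u @ u'" "v' @ v"] by simp
next
  case (dup u' x v')
  then show ?case using ep_step.dup[of K "u @ u'" x "v' @ v"] by simp
qed

lemma EQ_cong: "ep_eq K a b \<Longrightarrow> ep_eq K (u @ a @ v) (u @ b @ v)"
  unfolding ep_eq_def
proof (induction rule: rtranclp_induct)
  case base then show ?case by simp
next
  case (step y z)
  then show ?case using ep_step_cong
    by (metis (mono_tags, lifting) rtranclp.rtrancl_into_rtrancl)
qed

lemma EQ_tri: "{x,y,z} \<in> K \<Longrightarrow> ep_eq K (u @ [x,y,z] @ v) (u @ [x,z] @ v)"
  unfolding ep_eq_def using ep_step.tri[of x y z K u v] by auto

lemma EQ_dup: "ep_eq K (u @ [x,x] @ v) (u @ [x] @ v)"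
  unfolding ep_eq_def using ep_step.dup[of K u x v] by auto

lemma EQ_back: "epath K s \<Longrightarrow> ep_eq K (u @ s @ tl (rev s) @ v) (u @ [hd s] @ v)"
proof (induction K s arbitrary: u v rule: epath.induct)
  case (1 K) then show ?case by simp
next
  case (2 K x) then show ?case by simp
next
  case (3 K x y r)
  have e: "{x,y} \<in> K" "epath K (y # r)" using 3 by auto
  have t: "tl (rev (x # y # r)) = tl (rev (y # r)) @ [x]" by (cases "rev r") auto
  have "ep_eq K (u @ (x # y # r) @ tl (rev (x # y # r)) @ v)
           ((u @ [x]) @ (y # r) @ tl (rev (y # r)) @ ([x] @ v))"
    by (cases "rev r") auto
  also have "ep_eq K \<dots> ((u @ [x]) @ [hd (y # r)] @ ([x] @ v))"
    using 3(1)[OF e(2)] .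
  also have "\<dots> = u @ [x, y, x] @ v" by simp
  also have "ep_eq K \<dots> (u @ [x, x] @ v)"
  proof -
    have "{x,y,x} = {x,y}" by auto
    then show ?thesis using EQ_tri[of x y x K u v] e(1) by simp
  qed
  also have "ep_eq K \<dots> (u @ [x] @ v)" by (rule EQ_dup)
  finally show ?case by simp
qed

lemma el_iff: "l \<in> edge_loops K p \<longleftrightarrow> epath K l \<and> hd l = p \<and> last l = p"
  by (simp add: edge_loops_def edge_path_epath)

lemma ec_mem: "l \<in> edge_loops K p \<Longrightarrow> l \<in> ep_class K p l"
  by (simp add: ep_class_def)

lemma ec_eq: "ep_eq K a b \<Longrightarrow> ep_class K p a = ep_class K p b"
  unfolding ep_class_def using EQ_sym EQ_trans by blast

lemma ec_memD: "x \<in> ep_class K p w \<Longrightarrow> ep_eq K w x \<and> x \<in> edge_loops K p"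
  by (simp add: ep_class_def)

lemma ec_some: "w \<in> edge_loops K p \<Longrightarrow> ep_eq K w (SOME a. a \<in> ep_class K p w) \<and> (SOME a. a \<in> ep_class K p w) \<in> edge_loops K p"
  using ec_memD ec_mem by (metis someI)

lemma loop_concat: "a \<in> edge_loops K p \<Longrightarrow> b \<in> edge_loops K p \<Longrightarrow> a @ tl b \<in> edge_loops K p"
proof -
  assume a: "a \<in> edge_loops K p" and b: "b \<in> edge_loops K p"
  then have ea: "epath K a" "hd a = p" "last a = p" and eb: "epath K b" "hd b = p" "last b = p"
    by (auto simp: el_iff)
  have "epath K (a @ tl b)" using epath_concat[OF ea(1) eb(1)] ea eb by simp
  moreover have "hd (a @ tl b) = p" using ea by (cases a) auto
  moreover have "last (a @ tl b) = p"
  proof (cases "tl b")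
    case Nil then show ?thesis using ea by simp
  next
    case (Cons c d)
    then have "last b = last (tl b)" using eb(1) by (cases b) auto
    then show ?thesis using Cons eb by simp
  qed
  ultimately show ?thesis by (simp add: el_iff)
qed

lemma butlast_tl: "a \<noteq> [] \<Longrightarrow> b \<noteq> [] \<Longrightarrow> last a = hd b \<Longrightarrow> a @ tl b = butlast a @ b"
  by (metis append.assoc append_Cons append_Nil append_butlast_last_id list.collapse)

lemma EQ_concat: assumes "a \<in> edge_loops K p" "a' \<in> edge_loops K p" "b \<in> edge_loops K p" "b' \<in> edge_loops K p"
  "ep_eq K a a'" "ep_eq K b b'"
  shows "ep_eq K (a @ tl b) (a' @ tl b')"
proof -
  have ne: "a' \<noteq> []" "b \<noteq> []" "b' \<noteq> []" "last a' = hd b" "last a' = hd b'"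
    using assms(2-4) by (auto simp: el_iff)
  have "ep_eq K (a @ tl b) (a' @ tl b)" using EQ_cong[OF assms(5), of "[]" "tl b"] by simp
  also have "a' @ tl b = butlast a' @ b" using ne butlast_tl by metis
  also have "ep_eq K \<dots> (butlast a' @ b')" using EQ_cong[OF assms(6), of "butlast a'" "[]"] by simp
  also have "\<dots> = a' @ tl b'" using ne butlast_tl by metis
  finally show ?thesis .
qed

lemma ep_carrier: "carrier (edge_path_group K p) = ep_class K p ` edge_loops K p"
  by (simp add: edge_path_group_def)

lemma ep_one: "one (edge_path_group K p) = ep_class K p [p]"
  by (simp add: edge_path_group_def)

lemma ep_mult: assumes "a \<in> edge_loops K p" "b \<in> edge_loops K p"
  shows "ep_class K p a \<otimes>\<^bsub>edge_path_group K p\<^esub> ep_class K p b = ep_class K p (a @ tl b)"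
proof -
  have "ep_eq K (a @ tl b) ((SOME x. x \<in> ep_class K p a) @ tl (SOME x. x \<in> ep_class K p b))"
    using ec_some[OF assms(1)] ec_some[OF assms(2)] assms by (intro EQ_concat) auto
  then show ?thesis by (simp add: edge_path_group_def ec_eq)
qed



context
  fixes E :: "'v set set" and p :: 'v
begin

definition reach :: "'v \<Rightarrow> bool" where
  "reach v \<longleftrightarrow> (\<exists>q. epath E q \<and> hd q = p \<and> last q = v)"

definition dist :: "'v \<Rightarrow> nat" where
  "dist v = (LEAST n. \<exists>q. epath E q \<and> hd q = p \<and> last q = v \<and> length q = Suc n)"

definition par :: "'v \<Rightarrow> 'v" where
  "par v = (SOME u. {u,v} \<in> E \<and> reach u \<and> Suc (dist u) = dist v)"

fun gam :: "nat \<Rightarrow> 'v \<Rightarrow> 'v list" where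
  "gam 0 v = [p]"
| "gam (Suc n) v = gam n (par v) @ [v]"

definition gamma :: "'v \<Rightarrow> 'v list" where
  "gamma v = gam (dist v) v"

lemma dist_ex: assumes "reach v"
  shows "\<exists>q. epath E q \<and> hd q = p \<and> last q = v \<and> length q = Suc (dist v)"
proof -
  obtain q where q: "epath E q" "hd q = p" "last q = v" using assms reach_def by auto
  then have "length q = Suc (length q - 1)" by (cases q) auto
  then have "\<exists>n q. epath E q \<and> hd q = p \<and> last q = v \<and> length q = Suc n" using q by blast
  then show ?thesis unfolding dist_def by (rule LeastI_ex)
qed

lemma dist_le: assumes "epath E q" "hd q = p" "last q = v"
  shows "dist v \<le> length q - 1"
proof -
  have "length q = Suc (length q - 1)" using assms by (cases q) auto
  then show ?thesis unfolding dist_def using assms by (intro Least_le) auto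
qed

lemma dist_idx: assumes "epath E q" "hd q = p" "i < length q"
  shows "reach (q ! i) \<and> dist (q ! i) \<le> i"
proof -
  let ?t = "take (Suc i) q"
  have t: "epath E ?t" using epath_take assms by blast
  have h: "hd ?t = p" using assms by (cases q) auto
  have l: "last ?t = q ! i" using assms by (simp add: take_Suc_conv_app_nth)
  have len: "length ?t = Suc i" using assms by simp
  show ?thesis using t h l len dist_le[OF t h l] reach_def by auto
qed

lemma reach_p: "reach p" unfolding reach_def by (rule exI[of _ "[p]"]) simp

lemma dist_p: "dist p = 0"
  using dist_le[of "[p]" p] by simp

lemma dist_0: assumes "reach v" "dist v = 0" shows "v = p"
  using dist_ex[OF assms(1)] assms(2) by (auto simp: length_Suc_conv)

lemma dist_edge: assumes "reach u" "{u,v} \<in> E" shows "reach v \<and> dist v \<le> Suc (dist u)"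
proof -
  obtain q where q: "epath E q" "hd q = p" "last q = u" "length q = Suc (dist u)"
    using dist_ex[OF assms(1)] by blast
  have ne: "q \<noteq> []" using q by auto
  have e: "epath E (q @ [v])"
    using q ne assms(2) epath_snoc[of E "butlast q" u v] by (metis append_butlast_last_id append_assoc append_Cons append_Nil)
  have "hd (q @ [v]) = p" using q ne by simp
  then show ?thesis using dist_le[OF e] e q reach_def by auto
qed

lemma par_prop: assumes "reach v" "v \<noteq> p"
  shows "{par v, v} \<in> E \<and> reach (par v) \<and> Suc (dist (par v)) = dist v"
proof -
  obtain q where q: "epath E q" "hd q = p" "last q = v" "length q = Suc (dist v)"
    using dist_ex[OF assms(1)] by blast
  have d0: "dist v \<noteq> 0" using dist_0 assms by blast
  then obtain n where n: "dist v = Suc n" by (cases "dist v") auto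
  let ?u = "q ! n"
  have qq: "q = take n q @ [q ! n, q ! Suc n]"
    using q n by (metis Suc_lessD append.assoc append_Cons append_Nil lessI take_Suc_conv_app_nth take_all_iff le_refl)
  have "q \<noteq> []" using q by auto
  then have ql: "q ! Suc n = v" using q n last_conv_nth[of q] by simp
  have edge: "{?u, v} \<in> E" using q(1) qq ql epath_snoc by metis
  have ru: "reach ?u \<and> dist ?u \<le> n" using dist_idx[OF q(1) q(2)] q n by simp
  have "dist v \<le> Suc (dist ?u)" using dist_edge ru edge by blast
  then have ex: "{?u,v} \<in> E \<and> reach ?u \<and> Suc (dist ?u) = dist v" using ru edge n by auto
  show ?thesis unfolding par_def by (rule someI[of _ ?u]) (rule ex)
qed

lemma gam_prop: "reach v \<Longrightarrow> dist v = n \<Longrightarrow>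
   epath E (gam n v) \<and> hd (gam n v) = p \<and> last (gam n v) = v \<and> length (gam n v) = Suc n"
proof (induction n arbitrary: v)
  case 0
  then show ?case using dist_0 by auto
next
  case (Suc n)
  have vp: "v \<noteq> p" using Suc dist_p by auto
  have pp: "{par v, v} \<in> E" "reach (par v)" "dist (par v) = n" using par_prop[OF Suc(2) vp] Suc(3) by auto
  have ih: "epath E (gam n (par v))" "hd (gam n (par v)) = p" "last (gam n (par v)) = par v"
     "length (gam n (par v)) = Suc n"
    using Suc.IH[OF pp(2) pp(3)] by auto
  have ne: "gam n (par v) \<noteq> []" using ih by auto
  have "epath E (gam n (par v) @ [v])"
    using ih ne pp(1) epath_snoc[of E "butlast (gam n (par v))" "par v" v]
    by (metis append_butlast_last_id append_assoc append_Cons append_Nil)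
  then show ?case using ih ne by simp
qed

lemma gamma_prop: "reach v \<Longrightarrow> epath E (gamma v) \<and> hd (gamma v) = p \<and> last (gamma v) = v \<and> length (gamma v) = Suc (dist v)"
  unfolding gamma_def using gam_prop by blast

lemma gamma_p: "gamma p = [p]"
  unfolding gamma_def by (simp add: dist_p)

lemma gamma_snoc: assumes "reach v" "v \<noteq> p" shows "gamma v = gamma (par v) @ [v]"
proof -
  have "dist v = Suc (dist (par v))" using par_prop[OF assms] by simp
  then show ?thesis unfolding gamma_def by simp
qed

end

lemma distinct_shortest:
  assumes "epath E q" "\<And>q'. epath E q' \<Longrightarrow> hd q' = hd q \<Longrightarrow> last q' = last q \<Longrightarrow> length q \<le> length q'"
  shows "distinct q"
proof (rule ccontr)
  assume "\<not> distinct q"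
  then obtain xs y ys zs where q: "q = xs @ [y] @ ys @ [y] @ zs" using not_distinct_decomp by blast
  let ?q = "xs @ [y] @ zs"
  have e1: "epath E (xs @ [y])" using assms(1) q epath_append[of E xs y "ys @ [y] @ zs"] by simp
  have e2: "epath E (y # zs)" using assms(1) q epath_append[of E "xs @ [y] @ ys" y zs] by simp
  have e: "epath E ?q" using e1 e2 epath_append[of E xs y zs] by simp
  have "hd ?q = hd q" using q by (cases xs) auto
  moreover have "last ?q = last q" using q by (cases zs) auto
  ultimately have "length q \<le> length ?q" using assms(2) e by blast
  then show False using q by simp
qed

lemma bridge:
  assumes nc: "\<not> has_cycle E" and uv: "{u,v} \<in> E" "u \<noteq> v"
  shows "\<not> (\<exists>q. epath (E - {{u,v}}) q \<and> hd q = u \<and> last q = v)"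
proof
  let ?E = "E - {{u,v}}"
  assume "\<exists>q. epath ?E q \<and> hd q = u \<and> last q = v"
  then have "\<exists>n q. epath ?E q \<and> hd q = u \<and> last q = v \<and> length q = n" by blast
  from LeastI_ex[OF this] obtain q where q: "epath ?E q" "hd q = u" "last q = v"
    and qmin: "length q = (LEAST n. \<exists>q. epath ?E q \<and> hd q = u \<and> last q = v \<and> length q = n)"
    by blast
  have "distinct q"
  proof (rule distinct_shortest[OF q(1)])
    fix q' assume "epath ?E q'" "hd q' = hd q" "last q' = last q"
    then show "length q \<le> length q'" unfolding qmin using q by (intro Least_le) auto
  qed
  moreover have "length q \<ge> 3"
  proof (rule ccontr)
    assume "\<not> 3 \<le> length q"
    then consider "q = []" | a where "q = [a]" | a b where "q = [a, b]"
      by (cases q; cases "tl q"; auto simp: Suc_le_eq)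
    then show False
    proof cases
      case 1 then show ?thesis using q by simp
    next
      case 2 then show ?thesis using q uv by simp
    next
      case 3 then show ?thesis using q by simp
    qed
  qed
  moreover have "\<forall>i < length q - 1. {q ! i, q ! Suc i} \<in> E"
    using epath_mono[OF q(1), of E] edge_path_epath[of E q] by (auto simp: edge_path_def)
  moreover have "{last q, hd q} \<in> E" using q uv by (simp add: insert_commute)
  ultimately show False using nc unfolding has_cycle_def by blast
qed

lemma key:
  assumes nc: "\<not> has_cycle E" and uv: "{u,v} \<in> E" "u \<noteq> v"
    and r: "reach E p u" "reach E p v" and d: "dist E p u \<le> dist E p v"
  shows "v \<noteq> p \<and> par E p v = u"
proof -
  have vp: "v \<noteq> p"
  proof
    assume "v = p"
    then have "dist E p u = 0" using d dist_p[of E p] by (metis le_zero_eq)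
    then show False using dist_0[OF r(1)] uv \<open>v = p\<close> by simp
  qed
  let ?w = "par E p v"
  have pw: "{?w, v} \<in> E" "reach E p ?w" "Suc (dist E p ?w) = dist E p v" using par_prop[OF r(2) vp] by auto
  have "?w = u"
  proof (rule ccontr)
    assume wu: "?w \<noteq> u"
    let ?gw = "gamma E p ?w" and ?gu = "gamma E p u"
    have gw: "epath E ?gw" "hd ?gw = p" "last ?gw = ?w" "length ?gw = dist E p v"
      using gamma_prop[OF pw(2)] pw(3) by auto
    have gu: "epath E ?gu" "hd ?gu = p" "last ?gu = u" "length ?gu = Suc (dist E p u)"
      using gamma_prop[OF r(1)] by auto
    have vgw: "v \<notin> set ?gw"
    proof
      assume "v \<in> set ?gw"
      then obtain i where i: "i < length ?gw" "?gw ! i = v" by (auto simp: in_set_conv_nth)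
      then show False using dist_idx[OF gw(1) gw(2) i(1)] gw(4) by simp
    qed
    have vgu: "v \<notin> set ?gu"
    proof
      assume "v \<in> set ?gu"
      then obtain i where i: "i < length ?gu" "?gu ! i = v" by (auto simp: in_set_conv_nth)
      have "i \<noteq> dist E p u"
      proof
        assume "i = dist E p u"
        moreover have "?gu \<noteq> []" using gu by auto
        ultimately have "?gu ! i = last ?gu" using gu last_conv_nth[of ?gu] by simp
        then show False using i gu uv by simp
      qed
      then show False using dist_idx[OF gu(1) gu(2) i(1)] gu(4) i d by simp
    qed
    let ?E = "E - {{u,v}}"
    have e1: "epath ?E ?gw" using epath_avoid[OF gw(1) vgw] by simp
    have e2: "epath ?E ?gu" using epath_avoid[OF gu(1) vgu] by simp
    have wv: "{?w, v} \<in> ?E" using pw(1) wu uv(2) by (auto simp: doubleton_eq_iff)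
    have gwne: "?gw \<noteq> []" using gw by auto
    have e3: "epath ?E (?gw @ [v])"
      using e1 gwne wv gw(3) epath_snoc[of ?E "butlast ?gw" ?w v]
      by (metis append_butlast_last_id append_assoc append_Cons append_Nil)
    have e4: "epath ?E (rev ?gu)" using e2 epath_rev by blast
    have "epath ?E (rev ?gu @ tl (?gw @ [v]))"
      by (rule epath_concat[OF e4 e3]) (use gu gw gwne in \<open>auto simp: last_rev hd_append\<close>)
    moreover have "hd (rev ?gu @ tl (?gw @ [v])) = u" using gu epath_nonempty[OF gu(1)]
      by (simp add: hd_append hd_rev)
    moreover have "last (rev ?gu @ tl (?gw @ [v])) = v" using gwne by (cases ?gw) auto
    ultimately show False using bridge[OF nc uv] by blast
  qed
  then show ?thesis using vp by simp
qed

lemma tree_prop: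
  assumes nc: "\<not> has_cycle E" and uv: "{u,v} \<in> E" "u \<noteq> v"
    and r: "reach E p u" "reach E p v"
  shows "gamma E p v = gamma E p u @ [v] \<or> gamma E p u = gamma E p v @ [u]"
proof (cases "dist E p u \<le> dist E p v")
  case True
  then show ?thesis using key[OF nc uv r True] gamma_snoc[OF r(2)] by auto
next
  case False
  have uv': "{v,u} \<in> E" using uv by (simp add: insert_commute)
  show ?thesis using key[OF nc uv' uv(2)[symmetric] r(2) r(1)] False gamma_snoc[OF r(1)] by auto
qed



fun pw :: "'v list \<Rightarrow> ('v \<times> 'v) word" where
  "pw (x # y # r) = ((x, y), True) # pw (y # r)"
| "pw _ = []"

lemma pw_append: "pw (u @ x # v) = pw (u @ [x]) @ pw (x # v)"
proof (induction u)
  case Nil then show ?case by simp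
next
  case (Cons a u) then show ?case by (cases u) auto
qed

lemma pw_snoc: "pw (u @ [x, y]) = pw (u @ [x]) @ [((x,y),True)]"
  using pw_append[of u x "[y]"] by simp

definition ori :: "'v set \<Rightarrow> 'v \<times> 'v" where
  "ori e = (SOME ab. e = {fst ab, snd ab})"

lemma ori_prop: "{fst (ori {a,b}), snd (ori {a,b})} = {a,b}"
proof -
  have ex: "\<exists>ab. {a,b} = {fst ab, snd ab}" by (rule exI[of _ "(a,b)"]) simp
  have "{a,b} = {fst (ori {a,b}), snd (ori {a,b})}" unfolding ori_def by (rule someI_ex[OF ex])
  then show ?thesis by (rule sym)
qed

lemma ori_cases: "ori {a,b} = (a,b) \<or> ori {a,b} = (b,a)"
proof -
  obtain f s where fs: "ori {a,b} = (f,s)" by (cases "ori {a,b}")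
  then have "{f,s} = {a,b}" using ori_prop[of a b] by simp
  then show ?thesis using fs by (auto simp: doubleton_eq_iff)
qed

definition dirok :: "'v \<Rightarrow> 'v \<Rightarrow> bool" where
  "dirok a b \<longleftrightarrow> ori {a,b} = (a,b)"

fun twk :: "'v list \<Rightarrow> 'v set word" where
  "twk (a # b # r) = ({a,b}, dirok a b) # twk (b # r)"
| "twk _ = []"

lemma twk_snoc: "twk (u @ [x, y]) = twk (u @ [x]) @ [({x,y}, dirok x y)]"
proof (induction u)
  case Nil then show ?case by simp
next
  case (Cons a u) then show ?case by (cases u) auto
qed

lemma twk_words: "epath E q \<Longrightarrow> twk q \<in> words E"
  by (induction E q rule: epath.induct) auto

definition SK :: "'v set set \<Rightarrow> ('v \<times> 'v) set" where
  "SK K = {(x, y). {x, y} \<in> K}"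

definition RK :: "'v set set \<Rightarrow> (('v \<times> 'v) word \<times> ('v \<times> 'v) word) set" where
  "RK K = {([((x, z), True)], [((x, y), True), ((y, z), True)]) | x y z. {x, y, z} \<in> K}"

lemma floating_eq: "floating_group K = presented_group (SK K) (RK K)"
  unfolding floating_group_def SK_def RK_def by (rule refl)

lemma pw_words: "epath K q \<Longrightarrow> pw q \<in> words (SK K)"
proof (induction K q rule: epath.induct)
  case (3 K x y r)
  then have "(x,y) \<in> SK K" by (simp add: SK_def)
  then show ?case using 3 by simp
qed simp_all

lemma simplicial_sub: "simplicial_complex K \<Longrightarrow> \<sigma> \<in> K \<Longrightarrow> \<tau> \<noteq> {} \<Longrightarrow> \<tau> \<subseteq> \<sigma> \<Longrightarrow> \<tau> \<in> K"
  unfolding simplicial_complex_def by blast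

lemma epath_join: "epath K a \<Longrightarrow> epath K b \<Longrightarrow> {last a, hd b} \<in> K \<Longrightarrow> epath K (a @ b)"
proof (induction K a rule: epath.induct)
  case (2 K x) then show ?case by (cases b) auto
qed auto

lemma epath_set: "epath K q \<Longrightarrow> hd q \<in> \<Union>K \<Longrightarrow> set q \<subseteq> \<Union>K"
proof (induction K q rule: epath.induct)
  case (3 K x y r)
  then have "{x,y} \<in> K" by simp
  then have "y \<in> \<Union>K" by blast
  then show ?case using 3 by auto
qed auto

definition pth :: "'v set set \<Rightarrow> 'v \<Rightarrow> 'v \<Rightarrow> 'v list \<Rightarrow> bool" where
  "pth K a b q \<longleftrightarrow> epath K q \<and> hd q = a \<and> last q = b"

lemma pth_concat: "pth K a b q \<Longrightarrow> pth K b c q' \<Longrightarrow> pth K a c (q @ tl q')"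
proof -
  assume a: "pth K a b q" and b: "pth K b c q'"
  then have ea: "epath K q" "hd q = a" "last q = b" and eb: "epath K q'" "hd q' = b" "last q' = c"
    by (auto simp: pth_def)
  have "epath K (q @ tl q')" using epath_concat[OF ea(1) eb(1)] ea eb by simp
  moreover have "hd (q @ tl q') = a" using ea by (cases q) auto
  moreover have "last (q @ tl q') = c"
  proof (cases "tl q'")
    case Nil
    then have "q' = [b]" using eb by (cases q') auto
    then show ?thesis using Nil ea eb by simp
  next
    case (Cons c d)
    then have "last q' = last (tl q')" using eb(1) by (cases q') auto
    then show ?thesis using Cons eb by simp
  qed
  ultimately show ?thesis by (simp add: pth_def)
qed

lemma pth_rev: "pth K a b q \<Longrightarrow> pth K b a (rev q)"
  by (auto simp: pth_def epath_rev hd_rev last_rev)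

lemma pth_loop: "pth K p p q \<longleftrightarrow> q \<in> edge_loops K p"
  by (simp add: pth_def el_iff)



lemma reach_rtranclp: "(\<lambda>a b. {a, b} \<in> E)\<^sup>*\<^sup>* p x \<Longrightarrow> reach E p x"
proof (induction rule: rtranclp_induct)
  case base then show ?case by (rule reach_p)
next
  case (step y z) then show ?case using dist_edge[of E p y z] by simp
qed

locale tsetup =
  fixes K :: "'v set set" and E :: "'v set set" and p :: 'v
  assumes sc: "simplicial_complex K" and st: "spanning_tree_edges K E" and pv: "p \<in> vertices K"
begin

abbreviation "PEK \<equiv> pres_eq (SK K) (RK K)"
abbreviation "G1 \<equiv> free_group E"
abbreviation "G2 \<equiv> edge_path_group K p"
abbreviation "fcl \<equiv> pres_class E ({} :: ('v set word \<times> 'v set word) set)"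
abbreviation "ec \<equiv> ep_class K p"

definition SF where "SF = Inl ` carrier G1 \<union> Inr ` carrier G2"
definition RF where "RF =
  {([(Inl a, True), (Inl b, True)], [(Inl (a \<otimes>\<^bsub>G1\<^esub> b), True)]) | a b. a \<in> carrier G1 \<and> b \<in> carrier G1}
      \<union> {([(Inr a, True), (Inr b, True)], [(Inr (a \<otimes>\<^bsub>G2\<^esub> b), True)]) | a b. a \<in> carrier G2 \<and> b \<in> carrier G2}"

lemma fp_eq: "free_product G1 G2 = presented_group SF RF"
  unfolding free_product_def SF_def RF_def by (rule refl)

abbreviation "PEF \<equiv> pres_eq SF RF"

definition gm where "gm v = gamma E p v"
definition X where "X v = fcl (twk (gm v))"
definition M where "M q = gm (hd q) @ tl q @ tl (rev (gm (last q)))"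
definition g where "g s = [(Inl (X (fst s)), False), (Inr (ec (M [fst s, snd s])), True), (Inl (X (snd s)), True)]"
definition hE where "hE e = [(ori e, True)]"
definition h where "h t = (case t of Inl A \<Rightarrow> wmap hE (SOME a. a \<in> A) | Inr B \<Rightarrow> pw (SOME b. b \<in> B))"

lemma E_sub: "E \<subseteq> K" using st by (auto simp: spanning_tree_edges_def)
lemma E_card: "e \<in> E \<Longrightarrow> card e = 2" using st by (auto simp: spanning_tree_edges_def)
lemma E_neq: "{u,v} \<in> E \<Longrightarrow> u \<noteq> v" using E_card[of "{u,v}"] by (cases "u = v") auto
lemma nc: "\<not> has_cycle E" using st by (simp add: spanning_tree_edges_def)

lemma vreach: assumes "x \<in> \<Union>K" shows "reach E p x"
proof -
  have "graph_connected (vertices K) E" using st by (simp add: spanning_tree_edges_def)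
  then have "(\<lambda>a b. {a, b} \<in> E)\<^sup>*\<^sup>* p x" using pv assms unfolding graph_connected_def vertices_def by blast
  then show ?thesis by (rule reach_rtranclp)
qed

lemma pv': "p \<in> \<Union>K" using pv by (simp add: vertices_def)

lemma gm_pth: assumes "x \<in> \<Union>K" shows "pth E p x (gm x)" "pth K p x (gm x)"
  using gamma_prop[OF vreach[OF assms]] epath_mono[OF _ E_sub] by (auto simp: gm_def pth_def)

lemma gm_ne: "x \<in> \<Union>K \<Longrightarrow> gm x \<noteq> []"
  using gm_pth(2)[of x] by (auto simp: pth_def)

lemma gm_p: "gm p = [p]" by (simp add: gm_def gamma_p)

lemma edge_vert: "{x,y} \<in> K \<Longrightarrow> x \<in> \<Union>K \<and> y \<in> \<Union>K" by blast

lemma tree: assumes "{u,v} \<in> E" shows "gm v = gm u @ [v] \<or> gm u = gm v @ [u]"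
proof -
  have "{u,v} \<in> K" using assms E_sub by blast
  then have r: "reach E p u" "reach E p v" using edge_vert vreach by blast+
  show ?thesis unfolding gm_def by (rule tree_prop[OF nc assms E_neq[OF assms] r])
qed

lemma M_loop: assumes "pth K a b q" "a \<in> \<Union>K" "b \<in> \<Union>K" shows "M q \<in> edge_loops K p"
proof -
  have hq: "hd q = a" "last q = b" using assms by (auto simp: pth_def)
  have "pth K p b (gm a @ tl q)" using pth_concat[OF gm_pth(2)[OF assms(2)] assms(1)] .
  from pth_concat[OF this pth_rev[OF gm_pth(2)[OF assms(3)]]]
  show ?thesis unfolding M_def pth_loop[symmetric] using hq by simp
qed

lemma G1_carrier: "carrier G1 = fcl ` words E"
  by (simp add: free_group_def pg_carrier)

lemma G1_mult: "a \<in> words E \<Longrightarrow> b \<in> words E \<Longrightarrow> fcl a \<otimes>\<^bsub>G1\<^esub> fcl b = fcl (a @ b)"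
  unfolding free_group_def by (rule pg_mult)

lemma X_carrier: "x \<in> \<Union>K \<Longrightarrow> X x \<in> carrier G1"
  unfolding X_def G1_carrier using twk_words[of E "gm x"] gm_pth(1)[of x] by (auto simp: pth_def)

lemma twk_gm_words: "x \<in> \<Union>K \<Longrightarrow> twk (gm x) \<in> words E"
  using twk_words[of E "gm x"] gm_pth(1)[of x] by (auto simp: pth_def)

lemma ec_carrier: "l \<in> edge_loops K p \<Longrightarrow> ec l \<in> carrier G2"
  by (simp add: ep_carrier)

end



lemma PE_idem: assumes "s \<in> S" "pres_eq S R [(s,True),(s,True)] [(s,True)]"
  shows "pres_eq S R [(s,True)] []"
proof -
  have "pres_eq S R [(s,True)] ([(s,True)] @ [(s,True),(s,\<not>True)] @ [])"
    using PE_sym[OF PE_cancel[OF assms(1), of R "[(s,True)]" True "[]"]] by simp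
  also have "\<dots> = [] @ [(s,True),(s,True)] @ [(s,False)]" by simp
  also have "pres_eq S R \<dots> ([] @ [(s,True)] @ [(s,False)])" using PE_cong[OF assms(2)] by blast
  also have "pres_eq S R \<dots> []" using PE_cancel0[OF assms(1), of R True] by simp
  finally show ?thesis .
qed

lemma PE_inv: assumes "t \<in> S" "pres_eq S R [(t,True),(s,True)] []"
  shows "pres_eq S R [(t,False)] [(s,True)]"
proof -
  have "pres_eq S R [(t,False)] ([(t,False)] @ [(t,True),(s,True)] @ [])"
    using PE_cong[OF PE_sym[OF assms(2)], of "[(t,False)]" "[]"] by simp
  also have "\<dots> = [] @ [(t,False),(t,\<not>False)] @ [(s,True)]" by simp
  also have "pres_eq S R \<dots> ([] @ [(s,True)])" using PE_cancel[OF assms(1)] by blast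
  finally show ?thesis by simp
qed

lemma wmap_letter:
  assumes "w \<in> words S"
    and kw: "\<And>s. s \<in> S \<Longrightarrow> k s \<in> words T"
    and fT: "\<And>s. s \<in> S \<Longrightarrow> f s \<in> T"
    and kid: "\<And>s. s \<in> S \<Longrightarrow> pres_eq T Q (k s) [(f s, True)]"
  shows "pres_eq T Q (wmap k w) (map (\<lambda>(s,b). (f s, b)) w)"
  using assms(1)
proof (induction w)
  case Nil then show ?case by simp
next
  case (Cons x w)
  obtain s b where x: "x = (s,b)" by force
  have s: "s \<in> S" using Cons x by auto
  have "pres_eq T Q (if b then k s else winv (k s)) [(f s,b)]"
  proof (cases b)
    case True then show ?thesis using kid s by simp
  next
    case False
    have "pres_eq T Q (winv (k s)) (winv [(f s,True)])"
      using PE_winv kw kid s fT by (metis words_Cons words_Nil fst_conv)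
    then show ?thesis using False by simp
  qed
  then have "pres_eq T Q ((if b then k s else winv (k s)) @ wmap k w) ([(f s,b)] @ map (\<lambda>(s,b). (f s, b)) w)"
    using Cons x by (intro PE_append) auto
  then show ?case using x by (cases b) auto
qed

lemma pw_join: "A \<noteq> [] \<Longrightarrow> B \<noteq> [] \<Longrightarrow> pw (A @ B) = pw A @ [((last A, hd B), True)] @ pw B"
proof -
  assume "A \<noteq> []" "B \<noteq> []"
  then obtain A' a B' b where ab: "A = A' @ [a]" "B = b # B'"
    by (metis append_butlast_last_id list.exhaust)
  have "pw (A' @ a # b # B') = pw (A' @ [a]) @ pw (a # b # B')" by (rule pw_append)
  then show ?thesis using ab by simp
qed

lemma pw_concat: "a \<noteq> [] \<Longrightarrow> b \<noteq> [] \<Longrightarrow> last a = hd b \<Longrightarrow> pw (a @ tl b) = pw a @ pw b"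
proof -
  assume "a \<noteq> []" "b \<noteq> []" "last a = hd b"
  then obtain a' x b' where ab: "a = a' @ [x]" "b = x # b'"
    by (metis append_butlast_last_id list.exhaust list.sel(1))
  show ?thesis using ab pw_append[of a' x b'] by simp
qed

lemma snoc_tl_rev: "L \<noteq> [] \<Longrightarrow> G \<noteq> [] \<Longrightarrow> last L = last G \<Longrightarrow> L @ tl (rev G) = butlast L @ rev G"
proof -
  assume a: "L \<noteq> []" "G \<noteq> []" "last L = last G"
  have "rev G = last G # tl (rev G)" using a by (metis hd_rev list.collapse rev_is_Nil_conv)
  moreover have "L = butlast L @ [last L]" using a(1) by (rule append_butlast_last_id[symmetric])
  ultimately show ?thesis using a(3) by (metis append_Cons append_assoc self_append_conv2)
qed

context tsetup
begin

lemma single: "x \<in> \<Union>K \<Longrightarrow> {x} \<in> K"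
  using simplicial_sub[OF sc] by blast

lemma SK_mem: "(x,y) \<in> SK K \<longleftrightarrow> {x,y} \<in> K" by (simp add: SK_def)

lemma RK_mem: "{x,y,z} \<in> K \<Longrightarrow> ([((x, z), True)], [((x, y), True), ((y, z), True)]) \<in> RK K"
  unfolding RK_def by blast

lemma L0: assumes "x \<in> \<Union>K" shows "PEK [((x,x),True)] []"
proof -
  have k: "{x} \<in> K" using single[OF assms] .
  have "{x,x,x} \<in> K" using k by simp
  then have "PEK [((x,x),True)] [((x,x),True),((x,x),True)]" by (rule PE_rel0[OF RK_mem])
  then show ?thesis using k by (intro PE_idem) (auto simp: SK_mem intro: PE_sym)
qed

lemma L1: assumes "{x,y} \<in> K" shows "PEK [((x,y),True),((y,x),True)] []"
proof -
  have "{x,y,x} = {x,y}" by auto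
  then have "{x,y,x} \<in> K" using assms by simp
  then have "PEK [((x,x),True)] [((x,y),True),((y,x),True)]" by (rule PE_rel0[OF RK_mem])
  then show ?thesis using L0[of x] assms by (blast intro: PE_sym PE_trans)
qed

lemma L2: assumes "{x,y} \<in> K" shows "PEK [((x,y),False)] [((y,x),True)]"
  using assms by (intro PE_inv L1) (auto simp: SK_mem)

lemma hE_words: "e \<in> E \<Longrightarrow> hE e \<in> words (SK K)"
proof -
  assume e: "e \<in> E"
  then obtain a b where ab: "e = {a,b}" using E_card by (meson card_2_iff)
  have "{fst (ori e), snd (ori e)} \<in> K" using ori_prop[of a b] ab e E_sub by auto
  then show ?thesis by (simp add: hE_def SK_def case_prod_beta)
qed

lemma hE_twk: "epath E q \<Longrightarrow> PEK (wmap hE (twk q)) (pw q)"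
proof (induction q rule: induct_list012)
  case (3 x y r)
  then have xy: "{x,y} \<in> K" using E_sub by auto
  have "PEK (if dirok x y then hE {x,y} else winv (hE {x,y})) [((x,y),True)]"
  proof (cases "dirok x y")
    case True then show ?thesis by (simp add: hE_def dirok_def)
  next
    case False
    then have "ori {x,y} = (y,x)" using ori_cases[of x y] by (simp add: dirok_def)
    then show ?thesis using False L2[of y x] xy by (simp add: hE_def insert_commute)
  qed
  moreover have "PEK (wmap hE (twk (y # r))) (pw (y # r))" using 3 by simp
  ultimately have "PEK ((if dirok x y then hE {x,y} else winv (hE {x,y})) @ wmap hE (twk (y # r)))
      ([((x,y),True)] @ pw (y # r))" by (rule PE_append)
  then show ?case by (cases "dirok x y") simp_all
qed simp_all

end



context tsetup
begin

lemma pw_rev: "epath K q \<Longrightarrow> PEK (pw (rev q)) (winv (pw q))"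
proof (induction q rule: induct_list012)
  case (3 x y r)
  have xy: "{x,y} \<in> K" and e: "epath K (y # r)" using 3 by auto
  have "pw (rev (x # y # r)) = pw (rev (y # r) @ [x])" by simp
  also have "\<dots> = pw (rev (y # r)) @ [((y, x), True)]"
    using pw_join[of "rev (y # r)" "[x]"] by (simp add: last_rev)
  finally have a: "pw (rev (x # y # r)) = pw (rev (y # r)) @ [((y, x), True)]" .
  have "PEK (pw (rev (y # r)) @ [((y, x), True)]) (winv (pw (y # r)) @ [((x,y),False)])"
    using 3(2)[OF e] PE_sym[OF L2[OF xy]] by (rule PE_append)
  then show ?case using a by simp
qed simp_all

definition Inv where "Inv l \<longleftrightarrow> epath K l \<and> hd l \<in> \<Union>K"

lemma hd_app: "hd (u @ x # v) = hd (u @ [x])" by (cases u) auto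

lemma step_inv: "ep_step K a b \<Longrightarrow> (Inv a \<longleftrightarrow> Inv b) \<and> (Inv a \<longrightarrow> PEK (pw a) (pw b))"
proof (induction rule: ep_step.induct)
  case (tri x y z u v)
  have xy: "{x,y} \<in> K" "{y,z} \<in> K" "{x,z} \<in> K"
    using simplicial_sub[OF sc tri, of "{x,y}"] simplicial_sub[OF sc tri, of "{y,z}"]
      simplicial_sub[OF sc tri, of "{x,z}"] by auto
  have ea: "epath K (u @ [x,y,z] @ v) \<longleftrightarrow> epath K (u @ [x]) \<and> epath K (z # v)"
    using epath_append[of K u x "y # z # v"] xy by auto
  have eb: "epath K (u @ [x,z] @ v) \<longleftrightarrow> epath K (u @ [x]) \<and> epath K (z # v)"
    using epath_append[of K u x "z # v"] xy by auto
  have hh: "hd (u @ [x,y,z] @ v) = hd (u @ [x,z] @ v)" using hd_app[of u x] by (metis append_Cons append_Nil)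
  have pa: "pw (u @ [x,y,z] @ v) = pw (u @ [x]) @ [((x,y),True), ((y,z),True)] @ pw (z # v)"
    using pw_append[of u x "y # z # v"] by simp
  have pb: "pw (u @ [x,z] @ v) = pw (u @ [x]) @ [((x,z),True)] @ pw (z # v)"
    using pw_append[of u x "z # v"] by simp
  have "PEK (pw (u @ [x,y,z] @ v)) (pw (u @ [x,z] @ v))"
    unfolding pa pb by (rule PE_sym, rule PE_rel, rule RK_mem, rule tri)
  then show ?case using ea eb hh by (simp add: Inv_def)
next
  case (dup u x v)
  have ea: "epath K (u @ [x,x] @ v) \<longleftrightarrow> epath K (u @ [x]) \<and> {x} \<in> K \<and> epath K (x # v)"
    using epath_append[of K u x "x # v"] by auto
  have eb: "epath K (u @ [x] @ v) \<longleftrightarrow> epath K (u @ [x]) \<and> epath K (x # v)"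
    using epath_append[of K u x v] by auto
  have hh: "hd (u @ [x,x] @ v) = hd (u @ [x] @ v)" using hd_app[of u x] by (metis append_Cons append_Nil)
  have xin: "x \<in> \<Union>K" if "Inv (u @ [x] @ v)"
    using that epath_set[of K "u @ [x] @ v"] by (auto simp: Inv_def)
  have xin2: "x \<in> \<Union>K" if "Inv (u @ [x,x] @ v)"
    using that epath_set[of K "u @ [x,x] @ v"] by (auto simp: Inv_def)
  have iff: "Inv (u @ [x,x] @ v) \<longleftrightarrow> Inv (u @ [x] @ v)"
  proof
    assume a: "Inv (u @ [x,x] @ v)"
    then show "Inv (u @ [x] @ v)" using ea eb hh unfolding Inv_def by simp
  next
    assume b: "Inv (u @ [x] @ v)"
    then have "{x} \<in> K" using xin single by blast
    then show "Inv (u @ [x,x] @ v)" using b ea eb hh unfolding Inv_def by simp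
  qed
  have pa: "pw (u @ [x,x] @ v) = pw (u @ [x]) @ [((x,x),True)] @ pw (x # v)"
    using pw_append[of u x "x # v"] by simp
  have pb: "pw (u @ [x] @ v) = pw (u @ [x]) @ [] @ pw (x # v)"
    using pw_append[of u x v] by simp
  have "Inv (u @ [x,x] @ v) \<longrightarrow> PEK (pw (u @ [x,x] @ v)) (pw (u @ [x] @ v))"
  proof
    assume "Inv (u @ [x,x] @ v)"
    then have "PEK [((x,x),True)] []" using xin2 L0 by blast
    then show "PEK (pw (u @ [x,x] @ v)) (pw (u @ [x] @ v))" unfolding pa pb by (rule PE_cong)
  qed
  then show ?case using iff by simp
qed

lemma pw_EQ: "ep_eq K a b \<Longrightarrow> Inv a \<Longrightarrow> Inv b \<and> PEK (pw a) (pw b)"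
  unfolding ep_eq_def
proof (induction rule: rtranclp_induct)
  case base then show ?case by simp
next
  case (step y z)
  then have iy: "Inv y" and pe: "PEK (pw a) (pw y)" by auto
  from step(2) have "Inv z \<and> PEK (pw y) (pw z)"
  proof
    assume "ep_step K y z" then show ?thesis using step_inv iy by blast
  next
    assume "ep_step K z y" then show ?thesis using step_inv[of z y] iy PE_sym by blast
  qed
  then show ?case using pe PE_trans by blast
qed

lemma loop_Inv: "l \<in> edge_loops K p \<Longrightarrow> Inv l"
  using pv' by (simp add: el_iff Inv_def)

end



context tsetup
begin

lemma hInl: assumes "w \<in> words E"
  shows "PEK (h (Inl (fcl w))) (wmap hE w) \<and> h (Inl (fcl w)) \<in> words (SK K)"
proof -
  let ?r = "SOME a. a \<in> fcl w"
  have r: "pres_eq E {} w ?r" "?r \<in> words E" using class_some[OF assms] by auto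
  have "PEK (wmap hE w) (wmap hE ?r)"
    by (rule wmap_PE[OF _ _ r(1)]) (auto simp: hE_words)
  moreover have "wmap hE ?r \<in> words (SK K)" using words_wmap[OF r(2)] hE_words by blast
  ultimately show ?thesis by (simp add: h_def PE_sym)
qed

lemma hInr: assumes "l \<in> edge_loops K p"
  shows "PEK (h (Inr (ec l))) (pw l) \<and> h (Inr (ec l)) \<in> words (SK K)"
proof -
  let ?r = "SOME a. a \<in> ec l"
  have r: "ep_eq K l ?r" "?r \<in> edge_loops K p" using ec_some[OF assms] by auto
  have "PEK (pw l) (pw ?r)" using pw_EQ[OF r(1) loop_Inv[OF assms]] by blast
  moreover have "pw ?r \<in> words (SK K)" using r(2) pw_words by (auto simp: el_iff)
  ultimately show ?thesis by (simp add: h_def PE_sym)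
qed

lemma SF_Inl: "A \<in> carrier G1 \<Longrightarrow> Inl A \<in> SF" by (simp add: SF_def)
lemma SF_Inr: "A \<in> carrier G2 \<Longrightarrow> Inr A \<in> SF" by (simp add: SF_def)

lemma FInl: "a \<in> carrier G1 \<Longrightarrow> b \<in> carrier G1 \<Longrightarrow> PEF [(Inl a,True),(Inl b,True)] [(Inl (a \<otimes>\<^bsub>G1\<^esub> b),True)]"
  by (rule PE_rel0) (unfold RF_def, blast)

lemma FInr: "a \<in> carrier G2 \<Longrightarrow> b \<in> carrier G2 \<Longrightarrow> PEF [(Inr a,True),(Inr b,True)] [(Inr (a \<otimes>\<^bsub>G2\<^esub> b),True)]"
  by (rule PE_rel0) (unfold RF_def, blast)

lemma fcl_carrier: "w \<in> words E \<Longrightarrow> fcl w \<in> carrier G1"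
  by (simp add: G1_carrier)

lemma F1: "PEF [(Inl (fcl []),True)] []"
proof -
  have c: "fcl [] \<in> carrier G1" by (simp add: fcl_carrier)
  have "fcl [] \<otimes>\<^bsub>G1\<^esub> fcl [] = fcl []" using G1_mult[of "[]" "[]"] by simp
  then show ?thesis using FInl[OF c c] SF_Inl[OF c] by (intro PE_idem) auto
qed

lemma p_loop: "[p] \<in> edge_loops K p" by (simp add: el_iff)

lemma F2: "PEF [(Inr (ec [p]),True)] []"
proof -
  have c: "ec [p] \<in> carrier G2" by (rule ec_carrier[OF p_loop])
  have "ec [p] \<otimes>\<^bsub>G2\<^esub> ec [p] = ec [p]" using ep_mult[OF p_loop p_loop] by simp
  then show ?thesis using FInr[OF c c] SF_Inr[OF c] by (intro PE_idem) auto
qed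

lemma F1': "PEF [(Inl (fcl []),False)] []"
proof -
  have c: "fcl [] \<in> carrier G1" by (simp add: fcl_carrier)
  have "PEF (winv [(Inl (fcl []),True)]) (winv [])"
    by (rule PE_winv[OF _ _ F1]) (auto simp: SF_Inl[OF c])
  then show ?thesis by simp
qed

lemma Fpair: assumes "e \<in> E"
  shows "PEF [(Inl (fcl [(e,b)]),True),(Inl (fcl [(e,\<not>b)]),True)] []"
proof -
  have w: "[(e,b)] \<in> words E" "[(e,\<not>b)] \<in> words E" using assms by auto
  have "fcl [(e,b)] \<otimes>\<^bsub>G1\<^esub> fcl [(e,\<not>b)] = fcl ([(e,b)] @ [(e,\<not>b)])" using G1_mult[OF w] .
  also have "\<dots> = fcl []" by (rule class_eq) (simp add: PE_cancel0[OF assms])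
  finally have eq: "fcl [(e,b)] \<otimes>\<^bsub>G1\<^esub> fcl [(e,\<not>b)] = fcl []" .
  show ?thesis using FInl[OF fcl_carrier[OF w(1)] fcl_carrier[OF w(2)]] F1 eq by (auto intro: PE_trans)
qed

lemma iota: "w \<in> words E \<Longrightarrow> PEF (map (\<lambda>(e,b). (Inl (fcl [(e,True)]), b)) w) [(Inl (fcl w), True)]"
proof (induction w)
  case Nil then show ?case using F1 PE_sym by simp
next
  case (Cons x w)
  obtain e b where x: "x = (e,b)" by force
  have e: "e \<in> E" and w: "w \<in> words E" using Cons x by auto
  have we: "[(e,b)] \<in> words E" "[(e,True)] \<in> words E" using e by auto
  have ct: "fcl [(e,True)] \<in> carrier G1" using fcl_carrier[OF we(2)] .
  have l1: "PEF [(Inl (fcl [(e,True)]), b)] [(Inl (fcl [(e,b)]), True)]"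
  proof (cases b)
    case True then show ?thesis by simp
  next
    case False
    have "PEF [(Inl (fcl [(e,True)]), False)] [(Inl (fcl [(e,\<not>True)]), True)]"
      by (rule PE_inv[OF SF_Inl[OF ct] Fpair[OF e]])
    then show ?thesis using False by simp
  qed
  have "PEF ([(Inl (fcl [(e,True)]), b)] @ map (\<lambda>(e,b). (Inl (fcl [(e,True)]), b)) w)
             ([(Inl (fcl [(e,b)]), True)] @ [(Inl (fcl w), True)])"
    using l1 Cons.IH[OF w] by (rule PE_append)
  also have "PEF \<dots> [(Inl (fcl [(e,b)] \<otimes>\<^bsub>G1\<^esub> fcl w), True)]"
    using FInl[OF fcl_carrier[OF we(1)] fcl_carrier[OF w]] by simp
  also have "fcl [(e,b)] \<otimes>\<^bsub>G1\<^esub> fcl w = fcl (x # w)" using G1_mult[OF we(1) w] x by simp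
  finally show ?case using x by simp
qed

end



context tsetup
begin

lemma pth_ne: "pth K a b q \<Longrightarrow> q \<noteq> []" by (auto simp: pth_def)

lemma M_J: assumes q: "pth K a b q" and q': "pth K b c q'" and v: "a \<in> \<Union>K" "b \<in> \<Union>K" "c \<in> \<Union>K"
  shows "ep_eq K (M q @ tl (M q')) (M (q @ tl q'))"
proof -
  let ?P = "gm a @ tl q"
  have P: "pth K p b ?P" using pth_concat[OF gm_pth(2)[OF v(1)] q] .
  have Pne: "?P \<noteq> []" using gm_ne[OF v(1)] by simp
  have lP: "last ?P = b" using P by (simp add: pth_def)
  have hq: "hd q = a" "last q = b" using q by (auto simp: pth_def)
  have hq': "hd q' = b" "last q' = c" using q' by (auto simp: pth_def)
  have gb: "gm b \<noteq> []" "last (gm b) = b" "hd (gm b) = p" using gm_ne[OF v(2)] gm_pth(2)[OF v(2)] by (auto simp: pth_def)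
  have Mq: "M q = butlast ?P @ rev (gm b) @ []"
    unfolding M_def using hq snoc_tl_rev[OF Pne gb(1)] lP gb(2) by simp
  have Mq': "tl (M q') = tl (gm b) @ tl q' @ tl (rev (gm c))"
    unfolding M_def using hq' gb(1) by simp
  have "M q @ tl (M q') = butlast ?P @ rev (gm b) @ tl (rev (rev (gm b))) @ (tl q' @ tl (rev (gm c)))"
    using Mq Mq' by simp
  also have "ep_eq K \<dots> (butlast ?P @ [hd (rev (gm b))] @ (tl q' @ tl (rev (gm c))))"
    by (rule EQ_back) (use gm_pth(2)[OF v(2)] in \<open>simp add: pth_def epath_rev\<close>)
  also have "\<dots> = (butlast ?P @ [b]) @ tl q' @ tl (rev (gm c))"
    using gb by (simp add: hd_rev)
  also have "butlast ?P @ [b] = ?P" using lP Pne append_butlast_last_id[of ?P] by simp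
  also have "?P @ tl q' @ tl (rev (gm c)) = gm a @ tl q @ tl q' @ tl (rev (gm c))" by simp
  also have "\<dots> = M (q @ tl q')"
  proof -
    have qq: "pth K a c (q @ tl q')" using pth_concat[OF q q'] .
    have "tl (q @ tl q') = tl q @ tl q'" using pth_ne[OF q] by simp
    then show ?thesis unfolding M_def using qq by (simp add: pth_def)
  qed
  finally show ?thesis .
qed

lemma M_mult: assumes q: "pth K a b q" and q': "pth K b c q'" and v: "a \<in> \<Union>K" "b \<in> \<Union>K" "c \<in> \<Union>K"
  shows "ec (M q) \<otimes>\<^bsub>G2\<^esub> ec (M q') = ec (M (q @ tl q'))"
  using ep_mult[OF M_loop[OF q v(1,2)] M_loop[OF q' v(2,3)]] ec_eq[OF M_J[OF assms]] by simp

lemma pth2: "{x,y} \<in> K \<Longrightarrow> pth K x y [x,y]" by (simp add: pth_def)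

lemma g_words: "s \<in> SK K \<Longrightarrow> g s \<in> words SF"
proof -
  assume "s \<in> SK K"
  then obtain x y where s: "s = (x,y)" "{x,y} \<in> K" by (auto simp: SK_def)
  have v: "x \<in> \<Union>K" "y \<in> \<Union>K" using s edge_vert by auto
  show ?thesis using s v X_carrier SF_Inl SF_Inr ec_carrier M_loop[OF pth2[OF s(2)] v]
    by (simp add: g_def)
qed

lemma gr: assumes "(l, r) \<in> RK K" shows "PEF (wmap g l) (wmap g r)"
proof -
  obtain x y z where l: "l = [((x, z), True)]" "r = [((x, y), True), ((y, z), True)]" "{x,y,z} \<in> K"
    using assms by (auto simp: RK_def)
  have e: "{x,y} \<in> K" "{y,z} \<in> K" "{x,z} \<in> K"
    using simplicial_sub[OF sc l(3), of "{x,y}"] simplicial_sub[OF sc l(3), of "{y,z}"]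
      simplicial_sub[OF sc l(3), of "{x,z}"] by auto
  have v: "x \<in> \<Union>K" "y \<in> \<Union>K" "z \<in> \<Union>K" using e edge_vert by auto
  have EQ: "ep_eq K (M [x,y,z]) (M [x,z])"
  proof -
    have lx: "last (gm x) = x" using gm_pth(2)[OF v(1)] by (simp add: pth_def)
    have gx: "butlast (gm x) @ [x] = gm x" using gm_ne[OF v(1)] lx append_butlast_last_id[of "gm x"] by simp
    have "M [x,y,z] = gm x @ [y,z] @ tl (rev (gm z))" by (simp add: M_def)
    also have "\<dots> = (butlast (gm x) @ [x]) @ [y,z] @ tl (rev (gm z))" by (simp only: gx)
    also have "\<dots> = butlast (gm x) @ [x,y,z] @ tl (rev (gm z))" by simp
    also have "ep_eq K \<dots> (butlast (gm x) @ [x,z] @ tl (rev (gm z)))" by (rule EQ_tri[OF l(3)])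
    also have "\<dots> = (butlast (gm x) @ [x]) @ [z] @ tl (rev (gm z))" by simp
    also have "\<dots> = M [x,z]" by (simp only: gx) (simp add: M_def)
    finally show ?thesis .
  qed
  have ecm: "ec (M [x,y]) \<otimes>\<^bsub>G2\<^esub> ec (M [y,z]) = ec (M [x,z])"
    using M_mult[OF pth2[OF e(1)] pth2[OF e(2)] v] ec_eq[OF EQ] by simp
  have cy: "Inl (X y) \<in> SF" using SF_Inl X_carrier v by blast
  have "wmap g r = [(Inl (X x), False), (Inr (ec (M [x,y])), True)] @ [(Inl (X y), True), (Inl (X y), \<not> True)]
       @ [(Inr (ec (M [y,z])), True), (Inl (X z), True)]"
    using l by (simp add: g_def)
  also have "PEF \<dots> ([(Inl (X x), False), (Inr (ec (M [x,y])), True)] @ [(Inr (ec (M [y,z])), True), (Inl (X z), True)])"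
    by (rule PE_cancel[OF cy])
  also have "\<dots> = [(Inl (X x), False)] @ [(Inr (ec (M [x,y])), True), (Inr (ec (M [y,z])), True)] @ [(Inl (X z), True)]"
    by simp
  also have "PEF \<dots> ([(Inl (X x), False)] @ [(Inr (ec (M [x,y]) \<otimes>\<^bsub>G2\<^esub> ec (M [y,z])), True)] @ [(Inl (X z), True)])"
    by (rule PE_cong, rule FInr) (rule ec_carrier[OF M_loop[OF pth2[OF e(1)] v(1,2)]],
        rule ec_carrier[OF M_loop[OF pth2[OF e(2)] v(2,3)]])
  also have "\<dots> = wmap g l" using l ecm by (simp add: g_def)
  finally show ?thesis by (rule PE_sym)
qed

end



context tsetup
begin

lemma pth_set: "pth K a b q \<Longrightarrow> a \<in> \<Union>K \<Longrightarrow> b \<in> \<Union>K"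
proof -
  assume q: "pth K a b q" and a: "a \<in> \<Union>K"
  then have e: "epath K q" "hd q = a" "last q = b" by (auto simp: pth_def)
  have s: "set q \<subseteq> \<Union>K" using epath_set[OF e(1)] e(2) a by simp
  have "last q \<in> set q" using epath_nonempty[OF e(1)] by simp
  then show ?thesis using s e(3) by blast
qed

lemma M_single: "x \<in> \<Union>K \<Longrightarrow> ec (M [x]) = ec [p]"
proof -
  assume v: "x \<in> \<Union>K"
  have "M [x] = [] @ gm x @ tl (rev (gm x)) @ []" by (simp add: M_def)
  also have "ep_eq K \<dots> ([] @ [hd (gm x)] @ [])"
    by (rule EQ_back) (use gm_pth(2)[OF v] in \<open>simp add: pth_def\<close>)
  also have "\<dots> = [p]" using gm_pth(2)[OF v] by (simp add: pth_def)
  finally show ?thesis by (rule ec_eq)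
qed

lemma tele: "pth K a b q \<Longrightarrow> a \<in> \<Union>K \<Longrightarrow>
  PEF (wmap g (pw q)) [(Inl (X a),False),(Inr (ec (M q)),True),(Inl (X b),True)]"
proof (induction q arbitrary: a rule: induct_list012)
  case 1 then show ?case by (simp add: pth_def)
next
  case (2 x)
  then have ab: "a = x" "b = x" by (auto simp: pth_def)
  have cx: "Inl (X x) \<in> SF" using SF_Inl X_carrier 2 ab by auto
  have "PEF ([(Inl (X x),False)] @ [(Inr (ec (M [x])),True)] @ [(Inl (X x),True)])
            ([(Inl (X x),False)] @ [] @ [(Inl (X x),True)])"
    using M_single 2 ab F2 by (intro PE_cong) simp
  also have "PEF ([(Inl (X x),False)] @ [] @ [(Inl (X x),True)]) []"
    using PE_cancel0[OF cx, of RF False] by simp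
  finally show ?case using ab by (simp add: PE_sym)
next
  case (3 x y r)
  have ax: "a = x" and xy: "{x,y} \<in> K" and q': "pth K y b (y # r)"
    using 3(3) by (auto simp: pth_def)
  have v: "x \<in> \<Union>K" "y \<in> \<Union>K" "b \<in> \<Union>K" using edge_vert[OF xy] pth_set[OF q'] edge_vert[OF xy] by auto
  have cy: "Inl (X y) \<in> SF" using SF_Inl X_carrier v by blast
  have c1: "ec (M [x,y]) \<in> carrier G2" by (rule ec_carrier[OF M_loop[OF pth2[OF xy] v(1,2)]])
  have c2: "ec (M (y # r)) \<in> carrier G2" by (rule ec_carrier[OF M_loop[OF q' v(2,3)]])
  have mm: "ec (M [x,y]) \<otimes>\<^bsub>G2\<^esub> ec (M (y # r)) = ec (M (x # y # r))"
    using M_mult[OF pth2[OF xy] q' v] by simp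
  have "wmap g (pw (x # y # r)) = g (x,y) @ wmap g (pw (y # r))" by simp
  also have "PEF \<dots> (g (x,y) @ [(Inl (X y),False),(Inr (ec (M (y # r))),True),(Inl (X b),True)])"
    using PE_cong[OF 3(2)[OF q' v(2)], of "g (x,y)" "[]"] by simp
  also have "\<dots> = [(Inl (X x), False), (Inr (ec (M [x,y])), True)] @ [(Inl (X y), True), (Inl (X y), \<not> True)]
       @ [(Inr (ec (M (y # r))), True), (Inl (X b), True)]" by (simp add: g_def)
  also have "PEF \<dots> ([(Inl (X x), False), (Inr (ec (M [x,y])), True)] @ [(Inr (ec (M (y # r))), True), (Inl (X b), True)])"
    by (rule PE_cancel[OF cy])
  also have "\<dots> = [(Inl (X x), False)] @ [(Inr (ec (M [x,y])), True), (Inr (ec (M (y # r))), True)] @ [(Inl (X b), True)]"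
    by simp
  also have "PEF \<dots> ([(Inl (X x), False)] @ [(Inr (ec (M [x,y]) \<otimes>\<^bsub>G2\<^esub> ec (M (y # r))), True)] @ [(Inl (X b), True)])"
    by (rule PE_cong, rule FInr[OF c1 c2])
  finally show ?case using mm ax by simp
qed

lemma EL: assumes e: "e \<in> E" shows "PEF (wmap g (hE e)) [(Inl (fcl [(e,True)]),True)]"
proof -
  obtain a b where ab: "e = {a,b}" using E_card e by (meson card_2_iff)
  obtain u v where uv: "ori e = (u,v)" by force
  have euv: "e = {u,v}" using ori_prop[of a b] ab uv by simp
  have une: "u \<noteq> v" using E_neq e euv by blast
  have d1: "dirok u v" using uv euv by (simp add: dirok_def)
  have vu: "{v,u} = e" using euv by blast
  have d2: "\<not> dirok v u" using uv une unfolding dirok_def vu by simp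
  have eK: "{u,v} \<in> K" using e euv E_sub by auto
  have vv: "u \<in> \<Union>K" "v \<in> \<Union>K" using edge_vert[OF eK] by auto
  have wg: "wmap g (hE e) = g (u,v)" using uv by (simp add: hE_def)
  have ew: "[(e,True)] \<in> words E" "[(e,False)] \<in> words E" using e by auto
  have cfT: "fcl [(e,True)] \<in> carrier G1" "fcl [(e,False)] \<in> carrier G1" using fcl_carrier ew by auto
  have cu: "X u \<in> carrier G1" "X v \<in> carrier G1" using X_carrier vv by auto
  have gu: "gm u \<noteq> []" "last (gm u) = u" "hd (gm u) = p" using gm_ne[OF vv(1)] gm_pth(2)[OF vv(1)] by (auto simp: pth_def)
  have gv: "gm v \<noteq> []" "last (gm v) = v" "hd (gm v) = p" using gm_ne[OF vv(2)] gm_pth(2)[OF vv(2)] by (auto simp: pth_def)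
  have backp: "ec (s @ tl (rev s)) = ec [p]" if "s = gm u \<or> s = gm v" for s
  proof -
    have es: "epath K s" "hd s = p" using that gm_pth(2) vv by (auto simp: pth_def)
    have "ep_eq K ([] @ s @ tl (rev s) @ []) ([] @ [hd s] @ [])" by (rule EQ_back[OF es(1)])
    then show ?thesis using es by (simp add: ec_eq)
  qed
  have Mp: "ec (M [u,v]) = ec [p]"
  proof (cases "gm v = gm u @ [v]")
    case True
    have "M [u,v] = gm v @ tl (rev (gm v))" unfolding M_def using True gu by simp
    then show ?thesis using backp by simp
  next
    case False
    then have B: "gm u = gm v @ [u]" using tree[OF e[unfolded euv]] by blast
    have rv: "v # tl (rev (gm v)) = rev (gm v)" using gv by (metis hd_rev list.collapse rev_is_Nil_conv)
    have t: "tl (rev (gm u)) = rev (gm v)" using B by simp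
    have "M [u,v] = gm u @ (v # tl (rev (gm v)))" by (simp add: M_def)
    also have "\<dots> = gm u @ tl (rev (gm u))" by (simp only: rv t)
    finally have "M [u,v] = gm u @ tl (rev (gm u))" .
    then show ?thesis using backp by simp
  qed
  have step1: "PEF (g (u,v)) [(Inl (X u), False), (Inl (X v), True)]"
    unfolding g_def fst_conv snd_conv Mp using PE_cong[OF F2, of "[(Inl (X u), False)]" "[(Inl (X v), True)]"]
    by simp
  show ?thesis
  proof (cases "gm v = gm u @ [v]")
    case True
    have gu': "butlast (gm u) @ [u] = gm u" using gu append_butlast_last_id[of "gm u"] by simp
    have "butlast (gm u) @ [u, v] = (butlast (gm u) @ [u]) @ [v]" by simp
    also have "\<dots> = gm v" by (simp only: gu' True)
    finally have "twk (gm v) = twk (butlast (gm u) @ [u, v])" by simp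
    also have "\<dots> = twk (gm u) @ [(e, True)]" using twk_snoc[of "butlast (gm u)" u v] d1
      unfolding gu' euv[symmetric] by simp
    finally have Xv: "X v = X u \<otimes>\<^bsub>G1\<^esub> fcl [(e,True)]"
      unfolding X_def using G1_mult[OF twk_gm_words[OF vv(1)] ew(1)] by simp
    have "[(Inl (X u), False), (Inl (X v), True)] = [(Inl (X u), False)] @ [(Inl (X v), True)] @ []" by simp
    also have "PEF \<dots> ([(Inl (X u), False)] @ [(Inl (X u),True),(Inl (fcl [(e,True)]),True)] @ [])"
      unfolding Xv by (rule PE_cong, rule PE_sym, rule FInl[OF cu(1) cfT(1)])
    also have "\<dots> = [] @ [(Inl (X u), False),(Inl (X u),\<not>False)] @ [(Inl (fcl [(e,True)]),True)]" by simp
    also have "PEF \<dots> ([] @ [(Inl (fcl [(e,True)]),True)])" by (rule PE_cancel[OF SF_Inl[OF cu(1)]])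
    finally show ?thesis using step1 wg by (auto intro: PE_trans)
  next
    case False
    then have B: "gm u = gm v @ [u]" using tree[OF e[unfolded euv]] by blast
    have gv': "butlast (gm v) @ [v] = gm v" using gv append_butlast_last_id[of "gm v"] by simp
    have "butlast (gm v) @ [v, u] = (butlast (gm v) @ [v]) @ [u]" by simp
    also have "\<dots> = gm u" by (simp only: gv' B)
    finally have "twk (gm u) = twk (butlast (gm v) @ [v, u])" by simp
    also have "\<dots> = twk (gm v) @ [(e, False)]" using twk_snoc[of "butlast (gm v)" v u] d2
      unfolding gv' vu by simp
    finally have Xu: "X u = X v \<otimes>\<^bsub>G1\<^esub> fcl [(e,False)]"
      unfolding X_def using G1_mult[OF twk_gm_words[OF vv(2)] ew(2)] by simp
    have w1: "[(Inl (X u), True)] \<in> words SF" "[(Inl (X v), True), (Inl (fcl [(e,False)]), True)] \<in> words SF"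
      using SF_Inl cu cfT by auto
    have "PEF (winv [(Inl (X u), True)]) (winv [(Inl (X v), True), (Inl (fcl [(e,False)]), True)])"
      by (rule PE_winv[OF w1]) (unfold Xu, rule PE_sym, rule FInl[OF cu(2) cfT(2)])
    then have "PEF [(Inl (X u), False), (Inl (X v), True)]
       ([(Inl (fcl [(e,False)]), False), (Inl (X v), False)] @ [(Inl (X v), True)])"
      using PE_append[OF _ PE_refl, of SF RF "[(Inl (X u), False)]" "[(Inl (fcl [(e,False)]), False), (Inl (X v), False)]" "[(Inl (X v), True)]"] by simp
    also have "\<dots> = [(Inl (fcl [(e,False)]), False)] @ [(Inl (X v), False), (Inl (X v), \<not>False)] @ []" by simp
    also have "PEF \<dots> ([(Inl (fcl [(e,False)]), False)] @ [])" by (rule PE_cancel[OF SF_Inl[OF cu(2)]])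
    also have "PEF \<dots> [(Inl (fcl [(e,True)]), True)]"
      using PE_inv[OF SF_Inl[OF cfT(2)] Fpair[OF e, of False]] by simp
    finally show ?thesis using step1 wg by (auto intro: PE_trans)
  qed
qed

end



context tsetup
begin

lemma hw: "t \<in> SF \<Longrightarrow> h t \<in> words (SK K)"
proof -
  assume "t \<in> SF"
  then consider A where "t = Inl A" "A \<in> carrier G1" | B where "t = Inr B" "B \<in> carrier G2"
    by (auto simp: SF_def)
  then show ?thesis
  proof cases
    case 1
    then obtain w where "w \<in> words E" "A = fcl w" by (auto simp: G1_carrier)
    then show ?thesis using hInl 1 by blast
  next
    case 2
    then obtain l where "l \<in> edge_loops K p" "B = ec l" by (auto simp: ep_carrier)
    then show ?thesis using hInr 2 by blast
  qed
qed

lemma gh: "t \<in> SF \<Longrightarrow> PEF (wmap g (h t)) [(t, True)]"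
proof -
  assume "t \<in> SF"
  then consider A where "t = Inl A" "A \<in> carrier G1" | B where "t = Inr B" "B \<in> carrier G2"
    by (auto simp: SF_def)
  then show ?thesis
  proof cases
    case 1
    then obtain w where w: "w \<in> words E" "A = fcl w" by (auto simp: G1_carrier)
    let ?r = "SOME a. a \<in> fcl w"
    have r: "pres_eq E {} w ?r" "?r \<in> words E" using class_some[OF w(1)] by auto
    have Ar: "A = fcl ?r" using w(2) class_eq[OF r(1)] by (rule trans)
    have ht: "h t = wmap hE ?r" using 1 w by (simp add: h_def)
    have "wmap g (h t) = wmap (\<lambda>e. wmap g (hE e)) ?r" unfolding ht by (rule wmap_comp)
    also have "PEF \<dots> (map (\<lambda>(s,b). (Inl (fcl [(s,True)]), b)) ?r)"
    proof (rule wmap_letter[OF r(2)])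
      fix e assume e: "e \<in> E"
      show "wmap g (hE e) \<in> words SF"
        by (rule words_wmap[OF hE_words[OF e]]) (simp add: g_words)
      show "Inl (fcl [(e,True)]) \<in> SF" using e by (intro SF_Inl fcl_carrier) auto
      show "PEF (wmap g (hE e)) [(Inl (fcl [(e,True)]), True)]" by (rule EL[OF e])
    qed
    also have "PEF \<dots> [(Inl (fcl ?r), True)]" by (rule iota[OF r(2)])
    finally show ?thesis using Ar 1 by simp
  next
    case 2
    then obtain l where l: "l \<in> edge_loops K p" "B = ec l" by (auto simp: ep_carrier)
    let ?r = "SOME a. a \<in> ec l"
    have r: "ep_eq K l ?r" "?r \<in> edge_loops K p" using ec_some[OF l(1)] by auto
    have Br: "B = ec ?r" using l(2) ec_eq[OF r(1)] by (rule trans)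
    have ht: "h t = pw ?r" using 2 l by (simp add: h_def)
    have rp: "pth K p p ?r" using r(2) by (simp add: pth_loop)
    have Mr: "M ?r = ?r"
    proof -
      have h: "?r \<noteq> []" "hd ?r = p" "last ?r = p" using rp by (auto simp: pth_def)
      have "M ?r = [p] @ tl ?r @ tl (rev [p])" unfolding M_def gm_p h(2) h(3) by (rule refl)
      also have "\<dots> = hd ?r # tl ?r" using h(2) by simp
      also have "\<dots> = ?r" using h(1) by simp
      finally show ?thesis .
    qed
    have Xp: "X p = fcl []" by (simp add: X_def gm_p)
    have "wmap g (h t) = wmap g (pw ?r)" by (simp add: ht)
    also have "PEF \<dots> ([(Inl (fcl []),False)] @ [(Inr B,True)] @ [(Inl (fcl []),True)])"
      using tele[OF rp pv'] Mr Xp Br by simp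
    also have "PEF \<dots> ([] @ [(Inr B,True)] @ [])"
      by (intro PE_append F1' F1 PE_refl)
    finally show ?thesis using 2 by simp
  qed
qed

lemma hg: "s \<in> SK K \<Longrightarrow> PEK (wmap h (g s)) [(s, True)]"
proof -
  assume "s \<in> SK K"
  then obtain x y where s: "s = (x,y)" "{x,y} \<in> K" by (auto simp: SK_def)
  have v: "x \<in> \<Union>K" "y \<in> \<Union>K" using s edge_vert by auto
  let ?P = "pw (gm x)" and ?Q = "pw (gm y)"
  have gxE: "epath E (gm x)" "epath E (gm y)" using gm_pth(1) v by (auto simp: pth_def)
  have gxK: "epath K (gm x)" "epath K (gm y)" using gm_pth(2) v by (auto simp: pth_def)
  have PQw: "?P \<in> words (SK K)" "?Q \<in> words (SK K)" using pw_words gxK by auto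
  have hx: "PEK (h (Inl (X x))) ?P" "h (Inl (X x)) \<in> words (SK K)"
    using hInl[OF twk_gm_words[OF v(1)]] hE_twk[OF gxE(1)] unfolding X_def by (blast intro: PE_trans)+
  have hy: "PEK (h (Inl (X y))) ?Q"
    using hInl[OF twk_gm_words[OF v(2)]] hE_twk[OF gxE(2)] unfolding X_def by (blast intro: PE_trans)
  have ml: "M [x,y] \<in> edge_loops K p" using M_loop[OF pth2[OF s(2)] v] .
  have Mxy: "M [x,y] = gm x @ rev (gm y)"
  proof -
    have "v' # tl (rev (gm y)) = rev (gm y)" if "v' = y" for v'
      using that gm_ne[OF v(2)] gm_pth(2)[OF v(2)] by (simp add: pth_def) (metis hd_rev list.collapse rev_is_Nil_conv)
    then show ?thesis by (simp add: M_def)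
  qed
  have pM: "pw (M [x,y]) = ?P @ [((x,y),True)] @ pw (rev (gm y))"
    unfolding Mxy using pw_join[of "gm x" "rev (gm y)"] gm_ne v gm_pth(2) by (simp add: pth_def hd_rev)
  have hm: "PEK (h (Inr (ec (M [x,y])))) (?P @ [((x,y),True)] @ winv ?Q)"
    using hInr[OF ml] pM PE_cong[OF pw_rev[OF gxK(2)], of "?P @ [((x,y),True)]" "[]"]
    by (auto intro: PE_trans)
  have wx: "PEK (winv (h (Inl (X x)))) (winv ?P)" by (rule PE_winv[OF hx(2) PQw(1) hx(1)])
  have "wmap h (g s) = winv (h (Inl (X x))) @ h (Inr (ec (M [x,y]))) @ h (Inl (X y))"
    using s by (simp add: g_def)
  also have "PEK \<dots> (winv ?P @ (?P @ [((x,y),True)] @ winv ?Q) @ ?Q)"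
    by (intro PE_append wx hm hy)
  also have "\<dots> = [] @ (winv ?P @ ?P) @ ([((x,y),True)] @ winv ?Q @ ?Q)" by simp
  also have "PEK \<dots> ([] @ [] @ ([((x,y),True)] @ winv ?Q @ ?Q))"
    by (rule PE_cong, rule PE_winv_left[OF PQw(1)])
  also have "\<dots> = [((x,y),True)] @ (winv ?Q @ ?Q) @ []" by simp
  also have "PEK \<dots> ([((x,y),True)] @ [] @ [])"
    by (rule PE_cong, rule PE_winv_left[OF PQw(2)])
  finally show ?thesis using s by simp
qed

lemma hr1: assumes 1: "a \<in> carrier G1" "b \<in> carrier G1"
  shows "PEK (h (Inl a) @ h (Inl b)) (h (Inl (a \<otimes>\<^bsub>G1\<^esub> b)))"
proof -
  obtain wa where wa: "wa \<in> words E" "a = fcl wa" using 1(1) by (auto simp: G1_carrier)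
  obtain wb where wb: "wb \<in> words E" "b = fcl wb" using 1(2) by (auto simp: G1_carrier)
  have ab: "a \<otimes>\<^bsub>G1\<^esub> b = fcl (wa @ wb)" unfolding wa(2) wb(2) by (rule G1_mult[OF wa(1) wb(1)])
  have w: "wa @ wb \<in> words E" using wa(1) wb(1) by simp
  have "PEK (h (Inl a) @ h (Inl b)) (wmap hE wa @ wmap hE wb)"
    unfolding wa(2) wb(2) by (rule PE_append[OF conjunct1[OF hInl[OF wa(1)]] conjunct1[OF hInl[OF wb(1)]]])
  also have "wmap hE wa @ wmap hE wb = wmap hE (wa @ wb)" by simp
  also have "PEK (wmap hE (wa @ wb)) (h (Inl (a \<otimes>\<^bsub>G1\<^esub> b)))" unfolding ab
    by (rule PE_sym[OF conjunct1[OF hInl[OF w]]])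
  finally show ?thesis .
qed

lemma hr2: assumes 2: "a \<in> carrier G2" "b \<in> carrier G2"
  shows "PEK (h (Inr a) @ h (Inr b)) (h (Inr (a \<otimes>\<^bsub>G2\<^esub> b)))"
proof -
  obtain la where la: "la \<in> edge_loops K p" "a = ec la" using 2(1) by (auto simp: ep_carrier)
  obtain lb where lb: "lb \<in> edge_loops K p" "b = ec lb" using 2(2) by (auto simp: ep_carrier)
  have ab: "a \<otimes>\<^bsub>G2\<^esub> b = ec (la @ tl lb)" unfolding la(2) lb(2) by (rule ep_mult[OF la(1) lb(1)])
  have lab: "la @ tl lb \<in> edge_loops K p" by (rule loop_concat[OF la(1) lb(1)])
  have ne: "la \<noteq> []" "lb \<noteq> []" "last la = hd lb" using la(1) lb(1) by (auto simp: el_iff)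
  have pc: "pw (la @ tl lb) = pw la @ pw lb" by (rule pw_concat[OF ne])
  have "PEK (h (Inr a) @ h (Inr b)) (pw la @ pw lb)"
    unfolding la(2) lb(2) by (rule PE_append[OF conjunct1[OF hInr[OF la(1)]] conjunct1[OF hInr[OF lb(1)]]])
  also have "pw la @ pw lb = pw (la @ tl lb)" by (rule pc[symmetric])
  also have "PEK (pw (la @ tl lb)) (h (Inr (a \<otimes>\<^bsub>G2\<^esub> b)))" unfolding ab
    by (rule PE_sym[OF conjunct1[OF hInr[OF lab]]])
  finally show ?thesis .
qed

lemma hr: assumes "(l, r) \<in> RF" shows "PEK (wmap h l) (wmap h r)"
proof -
  have "(\<exists>a b. l = [(Inl a, True), (Inl b, True)] \<and> r = [(Inl (a \<otimes>\<^bsub>G1\<^esub> b), True)] \<and>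
      a \<in> carrier G1 \<and> b \<in> carrier G1) \<or>
    (\<exists>a b. l = [(Inr a, True), (Inr b, True)] \<and> r = [(Inr (a \<otimes>\<^bsub>G2\<^esub> b), True)] \<and>
      a \<in> carrier G2 \<and> b \<in> carrier G2)"
    using assms unfolding RF_def by (simp only: Un_iff mem_Collect_eq prod.inject) blast
  then show ?thesis
  proof (elim disjE exE conjE)
    fix a b assume "l = [(Inl a, True), (Inl b, True)]" "r = [(Inl (a \<otimes>\<^bsub>G1\<^esub> b), True)]"
      "a \<in> carrier G1" "b \<in> carrier G1"
    then show ?thesis using hr1[of a b] by simp
  next
    fix a b assume "l = [(Inr a, True), (Inr b, True)]" "r = [(Inr (a \<otimes>\<^bsub>G2\<^esub> b), True)]"
      "a \<in> carrier G2" "b \<in> carrier G2"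
    then show ?thesis using hr2[of a b] by simp
  qed
qed

lemma main_iso: "floating_group K \<cong> free_product G1 G2"
  unfolding floating_eq fp_eq
  by (rule presented_iso[OF g_words gr hw hr hg gh])

end

theorem proposition6p3:
  fixes K :: "'v set set" and E :: "'v set set" and p :: 'v
  assumes "simplicial_complex K"
    and "sc_connected K"
    and "spanning_tree_edges K E"
    and "p \<in> vertices K"
  shows "floating_group K \<cong> free_product (free_group E) (edge_path_group K p)
         \<and> (\<exists>X :: 'v set set. floating_group K \<cong> free_product (free_group X) (edge_path_group K p))"
proof -
  interpret tsetup K E p using assms by (unfold_locales) auto
  have "floating_group K \<cong> free_product (free_group E) (edge_path_group K p)" by (rule main_iso)
  then show ?thesis by blast
qed


end
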